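(* There exist absolute constants $c>0$ and $d_0$ such that for all $d\ge d_0$, all $\kappa$ with $10\le \kappa\le d^4$, and every step size $h>0$, there is a Gaussian density $\pi\propto e^{-f}$ on $\mathbb{R}^d$, with $f$ a quadratic satisfying $I\preceq \nabla^2 f\preceq \kappa I$, such that the relaxation time of the MALA Markov chain with step size $h$ and stationary distribution $\pi$ is at least $c\,\kappa\sqrt d/\sqrt{\log d}$.
   Context: For $f:\mathbb{R}^d\to\mathbb{R}$ differentiable with $\int e^{-f}<\infty$, let $\pi$ denote the probability measure with density proportional to $e^{-f}$. The MALA (Metropolis-adjusted Langevin algorithm) Markov chain with step size $h>0$ is defined as follows: from the current point $x$, propose $y=x-h\nabla f(x)+\sqrt{2h}\,g$ with $g\sim\mathcal N(0,I_d)$; move to $y$ with probability $\min\{1,\exp(f(x)-f(y)+\frac{1}{4h}(\|y-x+h\nabla f(x)\|_2^2-\|x-y+h\nabla f(y)\|_2^2))\}$, and otherwise stay at $x$. This chain is reversible with stationary distribution $\pi$. For a Markov kernel $\{\mathcal T_x\}$ reversible with respect to $\pi$, the Dirichlet form is $\mathcal E(\phi,\phi)=\frac12\iint(\phi(x)-\phi(y))^2\,\mathcal T_x(dy)\,\pi(dx)$, the spectral gap is $\lambda=\inf\{\mathcal E(\phi,\phi)/\mathrm{Var}_\pi(\phi)\}$ over non-constant $\phi\in L^2(\pi)$, and the relaxation time is $1/\lambda$ (infinite if $\lambda=0$). *)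

theory Defs
  imports "HOL-Probability.Probability"
begin

text \<open>Points of R^d are represented as extensional functions nat => real on {..<d};
  Lebesgue measure on R^d is the product of d copies of lborel.\<close>

definition leb :: "nat \<Rightarrow> (nat \<Rightarrow> real) measure" where
  "leb d = PiM {..<d} (\<lambda>_. lborel)"

definition sqnorm :: "nat \<Rightarrow> (nat \<Rightarrow> real) \<Rightarrow> real" where
  "sqnorm d v = (\<Sum>i<d. (v i)\<^sup>2)"

definition quad :: "nat \<Rightarrow> (nat \<Rightarrow> nat \<Rightarrow> real) \<Rightarrow> (nat \<Rightarrow> real) \<Rightarrow> (nat \<Rightarrow> real) \<Rightarrow> real" where
  "quad d A b x = (1/2) * (\<Sum>i<d. \<Sum>j<d. A i j * x i * x j) + (\<Sum>i<d. b i * x i)"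

definition quad_grad :: "nat \<Rightarrow> (nat \<Rightarrow> nat \<Rightarrow> real) \<Rightarrow> (nat \<Rightarrow> real) \<Rightarrow> (nat \<Rightarrow> real) \<Rightarrow> (nat \<Rightarrow> real)" where
  "quad_grad d A b x = (\<lambda>i. if i < d then (\<Sum>j<d. A i j * x j) + b i else undefined)"

definition target :: "nat \<Rightarrow> ((nat \<Rightarrow> real) \<Rightarrow> real) \<Rightarrow> (nat \<Rightarrow> real) measure" where
  "target d f = density (leb d)
     (\<lambda>x. ennreal (exp (- f x) / (\<integral>y. exp (- f y) \<partial>leb d)))"

text \<open>MALA: proposal density of y = x - h grad f(x) + sqrt(2h) g, g ~ N(0,I_d),
  and acceptance probability.\<close>

definition mala_prop :: "nat \<Rightarrow> ((nat \<Rightarrow> real) \<Rightarrow> (nat \<Rightarrow> real)) \<Rightarrow> real \<Rightarrow>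
    (nat \<Rightarrow> real) \<Rightarrow> (nat \<Rightarrow> real) \<Rightarrow> real" where
  "mala_prop d gf h x y =
     (4 * pi * h) powr (- real d / 2) *
     exp (- sqnorm d (\<lambda>i. y i - x i + h * gf x i) / (4 * h))"

definition mala_acc :: "nat \<Rightarrow> ((nat \<Rightarrow> real) \<Rightarrow> real) \<Rightarrow> ((nat \<Rightarrow> real) \<Rightarrow> (nat \<Rightarrow> real)) \<Rightarrow> real \<Rightarrow>
    (nat \<Rightarrow> real) \<Rightarrow> (nat \<Rightarrow> real) \<Rightarrow> real" where
  "mala_acc d f gf h x y =
     min 1 (exp (f x - f y + (1 / (4 * h)) *
        (sqnorm d (\<lambda>i. y i - x i + h * gf x i) - sqnorm d (\<lambda>i. x i - y i + h * gf y i))))"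

text \<open>MALA transition kernel T_x: accepted proposals plus a point mass at x
  carrying the rejection probability.\<close>

definition mala_kernel :: "nat \<Rightarrow> ((nat \<Rightarrow> real) \<Rightarrow> real) \<Rightarrow> ((nat \<Rightarrow> real) \<Rightarrow> (nat \<Rightarrow> real)) \<Rightarrow> real \<Rightarrow>
    (nat \<Rightarrow> real) \<Rightarrow> (nat \<Rightarrow> real) measure" where
  "mala_kernel d f gf h x =
     (let acc = density (leb d) (\<lambda>y. ennreal (mala_prop d gf h x y * mala_acc d f gf h x y))
      in measure_of (space (leb d)) (sets (leb d))
           (\<lambda>A. emeasure acc A + (1 - emeasure acc (space (leb d))) * indicator A x))"

definition dirichlet_form :: "'a measure \<Rightarrow> ('a \<Rightarrow> 'a measure) \<Rightarrow> ('a \<Rightarrow> real) \<Rightarrow> ennreal" where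
  "dirichlet_form M T \<phi> = (1/2) * (\<integral>\<^sup>+ x. (\<integral>\<^sup>+ y. ennreal ((\<phi> x - \<phi> y)\<^sup>2) \<partial>T x) \<partial>M)"

definition var :: "'a measure \<Rightarrow> ('a \<Rightarrow> real) \<Rightarrow> real" where
  "var M \<phi> = (\<integral>x. (\<phi> x - (\<integral>y. \<phi> y \<partial>M))\<^sup>2 \<partial>M)"

definition L2 :: "'a measure \<Rightarrow> ('a \<Rightarrow> real) set" where
  "L2 M = {\<phi>. \<phi> \<in> borel_measurable M \<and> integrable M (\<lambda>x. (\<phi> x)\<^sup>2)}"

text \<open>Non-constant elements of L2(pi) (i.e. not pi-a.e. constant) are those of positive variance.\<close>

definition spectral_gap :: "'a measure \<Rightarrow> ('a \<Rightarrow> 'a measure) \<Rightarrow> ennreal" where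
  "spectral_gap M T = (INF \<phi> \<in> {\<phi> \<in> L2 M. \<not> (\<exists>c. AE x in M. \<phi> x = c)}.
       dirichlet_form M T \<phi> / ennreal (var M \<phi>))"

text \<open>Relaxation time 1/lambda; in ennreal 1/0 = top (infinite).\<close>

definition relaxation_time :: "'a measure \<Rightarrow> ('a \<Rightarrow> 'a measure) \<Rightarrow> ennreal" where
  "relaxation_time M T = 1 / spectral_gap M T"

end

theory Submission
  imports Defs
begin


lemma gauss_bochner:
  fixes a b :: real assumes a: "a > 0"
  shows "has_bochner_integral lborel (\<lambda>x. exp (- a * x\<^sup>2 + b * x)) (sqrt (pi / a) * exp (b\<^sup>2 / (4 * a)))"
proof -
  define \<mu> where "\<mu> = b / (2 * a)"
  define \<sigma> where "\<sigma> = 1 / sqrt (2 * a)"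
  have s: "\<sigma> > 0" using a by (simp add: \<sigma>_def)
  have s2: "\<sigma>\<^sup>2 = 1 / (2*a)" using a by (simp add: \<sigma>_def power_divide)
  have eq: "exp (- a * x\<^sup>2 + b * x) = (sqrt (pi / a) * exp (b\<^sup>2 / (4 * a))) * normal_density \<mu> \<sigma> x" for x
  proof -
    have nd: "normal_density \<mu> \<sigma> x = exp (- a * (x - \<mu>)\<^sup>2) / sqrt (pi / a)"
      unfolding normal_density_def s2 using a by (simp add: field_simps)
    have "- a * x\<^sup>2 + b * x = b\<^sup>2 / (4 * a) + (- a * (x - \<mu>)\<^sup>2)"
      using a by (simp add: \<mu>_def field_simps power2_eq_square)
    then have e1: "exp (- a * x\<^sup>2 + b * x) = exp (b\<^sup>2 / (4 * a)) * exp (- a * (x - \<mu>)\<^sup>2)"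
      by (simp only: exp_add)
    have sp: "sqrt (pi / a) > 0" using a by simp
    show ?thesis unfolding e1 nd using sp a by (simp add: field_simps)
  qed
  have "has_bochner_integral lborel (\<lambda>x. (sqrt (pi / a) * exp (b\<^sup>2 / (4 * a))) * normal_density \<mu> \<sigma> x)
     ((sqrt (pi / a) * exp (b\<^sup>2 / (4 * a))) * 1)"
    apply (rule has_bochner_integral_mult_right)
    using integral_normal_density[OF s] integrable_normal_density[OF s]
    by (simp add: has_bochner_integral_iff)
  moreover have "(\<lambda>x. exp (- a * x\<^sup>2 + b * x)) = (\<lambda>x. (sqrt (pi / a) * exp (b\<^sup>2 / (4 * a))) * normal_density \<mu> \<sigma> x)"
    using eq by auto
  ultimately show ?thesis by simp
qed

lemma gauss_nn:
  fixes a b :: real assumes a: "a > 0"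
  shows "(\<integral>\<^sup>+x. ennreal (exp (- a * x\<^sup>2 + b * x)) \<partial>lborel) = ennreal (sqrt (pi / a) * exp (b\<^sup>2 / (4 * a)))"
proof -
  note h = gauss_bochner[OF a, of b]
  have "(\<integral>\<^sup>+x. ennreal (exp (- a * x\<^sup>2 + b * x)) \<partial>lborel) = ennreal (\<integral>x. exp (- a * x\<^sup>2 + b * x) \<partial>lborel)"
    by (rule nn_integral_eq_integral[OF integrable.intros[OF h]]) simp
  then show ?thesis using h has_bochner_integral_integral_eq by metis
qed

lemma master2:
  fixes \<alpha> \<beta> \<delta> :: real assumes "\<alpha> > 0" "\<beta> > 0" "\<alpha> * \<beta> > \<delta>\<^sup>2"
  shows "(\<integral>\<^sup>+x. \<integral>\<^sup>+y. ennreal (exp (- (\<alpha> * x\<^sup>2 + \<beta> * y\<^sup>2 - 2 * \<delta> * x * y))) \<partial>lborel \<partial>lborel)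
     = ennreal (pi / sqrt (\<alpha> * \<beta> - \<delta>\<^sup>2))"
proof -
  have a': "\<alpha> - \<delta>\<^sup>2 / \<beta> > 0" using assms by (simp add: field_simps)
  have inner: "(\<integral>\<^sup>+y. ennreal (exp (- (\<alpha> * x\<^sup>2 + \<beta> * y\<^sup>2 - 2 * \<delta> * x * y))) \<partial>lborel)
      = ennreal (sqrt (pi / \<beta>) * exp (- (\<alpha> - \<delta>\<^sup>2 / \<beta>) * x\<^sup>2 + 0 * x))" for x
  proof -
    have "\<And>y. exp (- (\<alpha> * x\<^sup>2 + \<beta> * y\<^sup>2 - 2 * \<delta> * x * y)) = exp (- \<alpha> * x\<^sup>2) * exp (- \<beta> * y\<^sup>2 + (2*\<delta>*x) * y)"
      by (simp add: exp_add[symmetric] algebra_simps)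
    then have "(\<integral>\<^sup>+y. ennreal (exp (- (\<alpha> * x\<^sup>2 + \<beta> * y\<^sup>2 - 2 * \<delta> * x * y))) \<partial>lborel)
       = (\<integral>\<^sup>+y. ennreal (exp (- \<alpha> * x\<^sup>2)) * ennreal (exp (- \<beta> * y\<^sup>2 + (2*\<delta>*x) * y)) \<partial>lborel)"
      by (simp add: ennreal_mult)
    also have "\<dots> = ennreal (exp (- \<alpha> * x\<^sup>2)) * (\<integral>\<^sup>+y. ennreal (exp (- \<beta> * y\<^sup>2 + (2*\<delta>*x) * y)) \<partial>lborel)"
      by (rule nn_integral_cmult) auto
    also have "\<dots> = ennreal (exp (- \<alpha> * x\<^sup>2)) * ennreal (sqrt (pi / \<beta>) * exp ((2*\<delta>*x)\<^sup>2 / (4 * \<beta>)))"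
      by (simp only: gauss_nn[OF assms(2)])
    also have "\<dots> = ennreal (sqrt (pi / \<beta>) * exp (- (\<alpha> - \<delta>\<^sup>2 / \<beta>) * x\<^sup>2 + 0 * x))"
      using assms by (simp add: ennreal_mult[symmetric] exp_add[symmetric] field_simps power2_eq_square)
    finally show ?thesis .
  qed
  have "(\<integral>\<^sup>+x. \<integral>\<^sup>+y. ennreal (exp (- (\<alpha> * x\<^sup>2 + \<beta> * y\<^sup>2 - 2 * \<delta> * x * y))) \<partial>lborel \<partial>lborel)
     = (\<integral>\<^sup>+x. ennreal (sqrt (pi / \<beta>)) * ennreal (exp (- (\<alpha> - \<delta>\<^sup>2 / \<beta>) * x\<^sup>2 + 0 * x)) \<partial>lborel)"
    by (intro nn_integral_cong) (subst inner, rule ennreal_mult, auto simp: assms less_imp_le)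
  also have "\<dots> = ennreal (sqrt (pi / \<beta>)) * ennreal (sqrt (pi / (\<alpha> - \<delta>\<^sup>2 / \<beta>)) * exp (0\<^sup>2 / (4 * (\<alpha> - \<delta>\<^sup>2 / \<beta>))))"
    by (subst nn_integral_cmult, measurable) (simp only: gauss_nn[OF a'])
  also have "\<dots> = ennreal (pi / sqrt (\<alpha> * \<beta> - \<delta>\<^sup>2))"
  proof -
    have "sqrt (pi / \<beta>) * sqrt (pi / (\<alpha> - \<delta>\<^sup>2 / \<beta>)) = sqrt (pi * pi / (\<alpha> * \<beta> - \<delta>\<^sup>2))"
      using assms by (simp add: real_sqrt_mult[symmetric] field_simps)
    also have "\<dots> = pi / sqrt (\<alpha> * \<beta> - \<delta>\<^sup>2)"
      by (simp add: real_sqrt_divide)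
    finally show ?thesis using assms a' by (subst ennreal_mult[symmetric]) (auto intro: less_imp_le)
  qed
  finally show ?thesis .
qed


lemma psf: "product_sigma_finite (\<lambda>_::nat. lborel :: real measure)"
  by (simp add: product_sigma_finite_def lborel.sigma_finite_measure_axioms)

lemma leb_prod_nn:
  assumes "\<And>i. i < d \<Longrightarrow> F i \<in> borel_measurable lborel"
  shows "(\<integral>\<^sup>+x. (\<Prod>i<d. F i (x i)) \<partial>leb d) = (\<Prod>i<d. \<integral>\<^sup>+y. F i y \<partial>lborel)"
  unfolding leb_def using assms by (intro product_sigma_finite.product_nn_integral_prod[OF psf]) auto

lemma leb_prod_int:
  fixes F :: "nat \<Rightarrow> real \<Rightarrow> real"
  assumes "\<And>i. i < d \<Longrightarrow> integrable lborel (F i)"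
  shows "integrable (leb d) (\<lambda>x. \<Prod>i<d. F i (x i))"
    and "(\<integral>x. (\<Prod>i<d. F i (x i)) \<partial>leb d) = (\<Prod>i<d. \<integral>y. F i y \<partial>lborel)"
  unfolding leb_def using assms
  by (auto intro!: product_sigma_finite.product_integral_prod[OF psf] product_sigma_finite.product_integrable_prod[OF psf])

lemma leb_prod_nn2:
  fixes F :: "nat \<Rightarrow> real \<Rightarrow> real \<Rightarrow> ennreal"
  assumes "\<And>i. i < d \<Longrightarrow> (\<lambda>(x,y). F i x y) \<in> borel_measurable borel"
  shows "(\<integral>\<^sup>+x. \<integral>\<^sup>+y. (\<Prod>i<d. F i (x i) (y i)) \<partial>leb d \<partial>leb d)
       = (\<Prod>i<d. \<integral>\<^sup>+x. \<integral>\<^sup>+y. F i x y \<partial>lborel \<partial>lborel)"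
proof -
  have pm: "(\<lambda>(x,y). F i x y) \<in> borel_measurable (lborel \<Otimes>\<^sub>M lborel)" if "i < d" for i
    unfolding lborel_prod using assms[OF that] by (simp add: measurable_lborel1)
  have m1: "F i x \<in> borel_measurable lborel" if "i < d" for i x
    using measurable_Pair2[OF pm[OF that], of x] by simp
  have m1': "F i x \<in> borel_measurable borel" if "i < d" for i x
    using m1[OF that] by simp
  have m2: "(\<lambda>x. \<integral>\<^sup>+y. F i x y \<partial>lborel) \<in> borel_measurable lborel" if "i < d" for i
    using lborel.borel_measurable_nn_integral[OF pm[OF that]] by simp
  have "(\<integral>\<^sup>+x. \<integral>\<^sup>+y. (\<Prod>i<d. F i (x i) (y i)) \<partial>leb d \<partial>leb d)
      = (\<integral>\<^sup>+x. (\<Prod>i<d. \<integral>\<^sup>+y. F i (x i) y \<partial>lborel) \<partial>leb d)"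
    by (intro nn_integral_cong leb_prod_nn[where F="\<lambda>i. F i (_ i)"]) (auto intro: m1')
  also have "\<dots> = (\<Prod>i<d. \<integral>\<^sup>+x. \<integral>\<^sup>+y. F i x y \<partial>lborel \<partial>lborel)"
    by (rule leb_prod_nn[where F="\<lambda>i x. \<integral>\<^sup>+y. F i x y \<partial>lborel"]) (rule m2)
  finally show ?thesis .
qed


definition Aiso :: "real \<Rightarrow> nat \<Rightarrow> nat \<Rightarrow> real" where
  "Aiso l = (\<lambda>i j. if i = j then l else 0)"

lemma Aiso_mult: "Aiso l i j * a * b = (if i = j then l * a * b else 0)"
  unfolding Aiso_def by simp

lemma Aiso_mult1: "Aiso l i j * a = (if i = j then l * a else 0)"
  unfolding Aiso_def by simp

lemma Aiso_sum: "(\<Sum>i<d. \<Sum>j<d. Aiso l i j * v i * v j) = l * sqnorm d v"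
  unfolding Aiso_mult sqnorm_def by (simp add: sum_distrib_left power2_eq_square mult.assoc)

lemma quad_iso: "quad d (Aiso l) (\<lambda>_. 0) x = l / 2 * sqnorm d x"
  unfolding quad_def Aiso_sum by simp

lemma quad_form_iso: "(\<Sum>i<d. \<Sum>j<d. Aiso l i j * v i * v j) = l * sqnorm d v"
  by (rule Aiso_sum)

lemma quad_grad_iso: "quad_grad d (Aiso l) (\<lambda>_. 0) x = (\<lambda>i. if i < d then l * x i else undefined)"
proof -
  have "(\<Sum>j<d. Aiso l i j * x j) = (if i < d then l * x i else 0)" for i
    unfolding Aiso_mult1 by simp
  then show ?thesis unfolding quad_grad_def by auto
qed

lemma exp_sqnorm: "exp (- (c * sqnorm d x)) = (\<Prod>i<d. exp (- c * (x i)\<^sup>2))"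
  unfolding sqnorm_def by (simp add: sum_distrib_left exp_sum[symmetric] sum_negf)

lemma Z_iso:
  assumes l: "l > 0"
  shows "(\<integral>y. exp (- (l / 2 * sqnorm d y)) \<partial>leb d) = sqrt (2 * pi / l) ^ d"
    and "integrable (leb d) (\<lambda>y. exp (- (l / 2 * sqnorm d y)))"
proof -
  have l2: "l / 2 > 0" using l by simp
  have v: "sqrt (pi / (l/2)) * exp (0\<^sup>2 / (4*(l/2))) = sqrt (2*pi/l)" by simp
  have f: "(\<lambda>x. exp (- (l/2) * x\<^sup>2 + 0*x)) = (\<lambda>x. exp (- (l/2) * x\<^sup>2))" by simp
  have g': "has_bochner_integral lborel (\<lambda>x. exp (- (l/2) * x\<^sup>2)) (sqrt (2 * pi / l))"
    using gauss_bochner[OF l2, of 0] by (simp only: v f)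
  have e: "(\<lambda>y. exp (- (l / 2 * sqnorm d y))) = (\<lambda>y. \<Prod>i<d. exp (- (l/2) * (y i)\<^sup>2))"
    by (simp only: exp_sqnorm)
  show "(\<integral>y. exp (- (l / 2 * sqnorm d y)) \<partial>leb d) = sqrt (2 * pi / l) ^ d"
    unfolding e using g' by (subst leb_prod_int(2)) (auto simp: has_bochner_integral_iff)
  show "integrable (leb d) (\<lambda>y. exp (- (l / 2 * sqnorm d y)))"
    unfolding e using g' by (intro leb_prod_int(1)) (auto simp: has_bochner_integral_iff)
qed

lemma nd0_iso:
  assumes l: "l > 0"
  shows "normal_density 0 (1 / sqrt l) z = exp (- (l/2) * z\<^sup>2) / sqrt (2 * pi / l)"
proof -
  have s2: "(1 / sqrt l)\<^sup>2 = 1 / l" using l by (simp add: power_divide)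
  have a: "2 * pi * (1 / l) = 2 * pi / l" by simp
  have b: "- (z - 0)\<^sup>2 / (2 * (1 / l)) = - (l/2) * z\<^sup>2" using l by simp
  show ?thesis unfolding normal_density_def s2 a b by simp
qed

lemma q_iso:
  assumes l: "l > 0"
  shows "exp (- (l / 2 * sqnorm d x)) / (\<integral>y. exp (- (l / 2 * sqnorm d y)) \<partial>leb d)
      = (\<Prod>i<d. normal_density 0 (1 / sqrt l) (x i))"
proof -
  have "(\<Prod>i<d. normal_density 0 (1 / sqrt l) (x i)) = (\<Prod>i<d. exp (- (l/2) * (x i)\<^sup>2) / sqrt (2 * pi / l))"
    by (simp only: nd0_iso[OF l])
  also have "\<dots> = (\<Prod>i<d. exp (- (l/2) * (x i)\<^sup>2)) / (\<Prod>i<d. sqrt (2 * pi / l))"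
    by (rule prod_dividef)
  also have "\<dots> = exp (- (l / 2 * sqnorm d x)) / sqrt (2 * pi / l) ^ d"
    by (simp only: exp_sqnorm prod_constant card_lessThan)
  finally show ?thesis unfolding Z_iso[OF l] by simp
qed

lemma powr_half_pow: "a > 0 \<Longrightarrow> a powr (- real d / 2) = (1 / sqrt a) ^ d"
proof -
  assume a: "a > 0"
  have "sqrt a ^ d = sqrt a powr real d" using a by (simp add: powr_realpow)
  also have "\<dots> = (a powr (1/2)) powr real d" using a by (simp add: powr_half_sqrt)
  also have "\<dots> = a powr (real d / 2)" by (simp add: powr_powr)
  finally have e: "sqrt a ^ d = a powr (real d / 2)" .
  have "a powr (- real d / 2) = a powr (- (real d / 2))" by simp
  also have "\<dots> = inverse (a powr (real d / 2))" by (rule powr_minus)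
  also have "\<dots> = inverse (sqrt a ^ d)" by (simp only: e)
  also have "\<dots> = (1 / sqrt a) ^ d" by (simp add: power_inverse divide_inverse)
  finally show ?thesis .
qed

lemma powr_half_pow': "a > 0 \<Longrightarrow> a powr (- (real d / 2)) = (1 / sqrt a) ^ d"
  using powr_half_pow[of a d] by simp

lemma prop_iso:
  assumes h: "h > 0"
  shows "mala_prop d (quad_grad d (Aiso l) (\<lambda>_. 0)) h x y
     = (\<Prod>i<d. normal_density ((1 - h * l) * x i) (sqrt (2 * h)) (y i))"
proof -
  have nd: "normal_density ((1 - h * l) * x i) (sqrt (2 * h)) (y i)
      = 1 / sqrt (4 * pi * h) * exp (- (1 / (4*h)) * (y i - x i + h * (l * x i))\<^sup>2)" for i
  proof -
    have s2: "(sqrt (2 * h))\<^sup>2 = 2 * h" using h by simp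
    have a: "2 * pi * (2 * h) = 4 * pi * h" by simp
    have b: "y i - (1 - h * l) * x i = y i - x i + h * (l * x i)" by (simp add: algebra_simps)
    have c: "- w / (2 * (2 * h)) = - (1 / (4*h)) * w" for w by simp
    show ?thesis unfolding normal_density_def s2 a b c ..
  qed
  have s: "sqnorm d (\<lambda>i. y i - x i + h * quad_grad d (Aiso l) (\<lambda>_. 0) x i)
         = sqnorm d (\<lambda>i. y i - x i + h * (l * x i))"
    unfolding sqnorm_def quad_grad_iso by simp
  have "exp (- sqnorm d (\<lambda>i. y i - x i + h * (l * x i)) / (4 * h))
      = (\<Prod>i<d. exp (- (1 / (4*h)) * (y i - x i + h * (l * x i))\<^sup>2))"
    using exp_sqnorm[of "1/(4*h)" d "\<lambda>i. y i - x i + h * (l * x i)"] by simp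
  then show ?thesis
    unfolding mala_prop_def s nd prod.distrib using h
    by (simp add: powr_half_pow' prod_constant)
qed


lemma singleton_leb: "x \<in> space (leb d) \<Longrightarrow> {x} \<in> sets (leb d)"
proof -
  assume x: "x \<in> space (leb d)"
  have "{x} = (\<Pi>\<^sub>E i\<in>{..<d}. {x i})"
    using x by (auto simp: leb_def space_PiM PiE_def extensional_def Pi_def fun_eq_iff) metis
  also have "\<dots> \<in> sets (leb d)" unfolding leb_def
    by (rule sets_PiM_I_finite) auto
  finally show ?thesis .
qed

lemma kernel_nn:
  fixes g :: "(nat \<Rightarrow> real) \<Rightarrow> ennreal"
  assumes x: "x \<in> space (leb d)"
    and Dm: "(\<lambda>y. ennreal (mala_prop d gf h x y * mala_acc d f gf h x y)) \<in> borel_measurable (leb d)"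
    and g: "g \<in> borel_measurable (leb d)" and gx: "g x = 0"
  shows "(\<integral>\<^sup>+y. g y \<partial>mala_kernel d f gf h x)
       = (\<integral>\<^sup>+y. ennreal (mala_prop d gf h x y * mala_acc d f gf h x y) * g y \<partial>leb d)"
proof -
  define D where "D = (\<lambda>y. ennreal (mala_prop d gf h x y * mala_acc d f gf h x y))"
  define \<Omega> where "\<Omega> = space (leb d)"
  define acc where "acc = density (leb d) D"
  define c where "c = 1 - emeasure acc \<Omega>"
  define \<mu> where "\<mu> = (\<lambda>A. emeasure acc A + c * indicator A x)"
  have T: "mala_kernel d f gf h x = measure_of \<Omega> (sets (leb d)) \<mu>"
    unfolding mala_kernel_def Let_def \<mu>_def c_def acc_def D_def \<Omega>_def ..
  have sa: "sigma_algebra \<Omega> (sets (leb d))" unfolding \<Omega>_def by (rule sets.sigma_algebra_axioms)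
  have pos: "positive (sets (leb d)) \<mu>" unfolding positive_def \<mu>_def by simp
  have sets_acc: "sets acc = sets (leb d)" unfolding acc_def by simp
  have ca: "countably_additive (sets (leb d)) \<mu>"
  proof (unfold countably_additive_def, intro allI impI)
    fix A :: "nat \<Rightarrow> _" assume A: "range A \<subseteq> sets (leb d)" "disjoint_family A" "\<Union> (range A) \<in> sets (leb d)"
    have "(\<Sum>i. \<mu> (A i)) = (\<Sum>i. emeasure acc (A i)) + (\<Sum>i. c * indicator (A i) x)"
      unfolding \<mu>_def by (rule suminf_add[symmetric]) auto
    also have "(\<Sum>i. emeasure acc (A i)) = emeasure acc (\<Union>i. A i)"
      using A sets_acc by (intro suminf_emeasure) auto
    also have "(\<Sum>i. c * indicator (A i) x) = c * indicator (\<Union>i. A i) x"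
      using suminf_indicator[OF A(2), of x] by simp
    finally show "(\<Sum>i. \<mu> (A i)) = \<mu> (\<Union> (range A))" unfolding \<mu>_def by simp
  qed
  have emT: "emeasure (mala_kernel d f gf h x) B = \<mu> B" if "B \<in> sets (leb d)" for B
    unfolding T by (rule emeasure_measure_of_sigma[OF sa pos ca that])
  have setsT: "sets (mala_kernel d f gf h x) = sets (leb d)"
    unfolding T \<Omega>_def by simp
  have spaceT: "space (mala_kernel d f gf h x) = \<Omega>"
    unfolding T \<Omega>_def by simp
  define I where "I = (indicator (\<Omega> - {x}) :: _ \<Rightarrow> ennreal)"
  have xs: "{x} \<in> sets (leb d)" using singleton_leb[OF x] .
  have Is: "\<Omega> - {x} \<in> sets (leb d)" unfolding \<Omega>_def using xs by auto
  have Im: "I \<in> borel_measurable (leb d)" unfolding I_def using Is by simp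
  have gI: "g y = I y * g y" if "y \<in> \<Omega>" for y
    using that gx by (cases "y = x") (auto simp: I_def)
  have IT: "I \<in> borel_measurable (mala_kernel d f gf h x)" using Im by (simp add: measurable_cong_sets[OF setsT refl])
  have IA: "I \<in> borel_measurable acc" using Im by (simp add: measurable_cong_sets[OF sets_acc refl])
  have eqd: "density (mala_kernel d f gf h x) I = density acc I"
  proof (rule measure_eqI)
    show "sets (density (mala_kernel d f gf h x) I) = sets (density acc I)"
      by (simp add: setsT sets_acc)
    fix B assume "B \<in> sets (density (mala_kernel d f gf h x) I)"
    then have B: "B \<in> sets (leb d)" by (simp add: setsT)
    have BI: "(\<Omega> - {x}) \<inter> B \<in> sets (leb d)" using B Is by auto
    have "emeasure (density (mala_kernel d f gf h x) I) B = (\<integral>\<^sup>+y. indicator ((\<Omega> - {x}) \<inter> B) y \<partial>mala_kernel d f gf h x)"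
      using B by (subst emeasure_density) (use IT in \<open>auto simp: setsT I_def indicator_inter_arith intro!: nn_integral_cong\<close>)
    also have "\<dots> = \<mu> ((\<Omega> - {x}) \<inter> B)" using BI by (simp add: setsT emT)
    also have "\<dots> = emeasure acc ((\<Omega> - {x}) \<inter> B)" unfolding \<mu>_def by simp
    also have "\<dots> = (\<integral>\<^sup>+y. indicator ((\<Omega> - {x}) \<inter> B) y \<partial>acc)" using BI by (simp add: sets_acc)
    also have "\<dots> = emeasure (density acc I) B"
      using B by (subst emeasure_density) (use IA in \<open>auto simp: sets_acc I_def indicator_inter_arith intro!: nn_integral_cong\<close>)
    finally show "emeasure (density (mala_kernel d f gf h x) I) B = emeasure (density acc I) B" .
  qed
  have gT: "g \<in> borel_measurable (mala_kernel d f gf h x)" using g by (simp add: measurable_cong_sets[OF setsT refl])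
  have "(\<integral>\<^sup>+y. g y \<partial>mala_kernel d f gf h x) = (\<integral>\<^sup>+y. I y * g y \<partial>mala_kernel d f gf h x)"
    using gI by (intro nn_integral_cong) (simp add: spaceT)
  also have "\<dots> = (\<integral>\<^sup>+y. g y \<partial>density (mala_kernel d f gf h x) I)"
    using gT IT by (simp add: nn_integral_density)
  also have "\<dots> = (\<integral>\<^sup>+y. g y \<partial>density acc I)" by (simp add: eqd)
  also have "\<dots> = (\<integral>\<^sup>+y. I y * g y \<partial>acc)"
    using g Im by (simp add: nn_integral_density sets_acc measurable_cong_sets[OF sets_acc refl])
  also have "\<dots> = (\<integral>\<^sup>+y. g y \<partial>acc)"
    using gI by (intro nn_integral_cong) (simp add: acc_def \<Omega>_def)
  also have "\<dots> = (\<integral>\<^sup>+y. D y * g y \<partial>leb d)"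
    unfolding acc_def using Dm g by (simp add: nn_integral_density D_def)
  finally show ?thesis unfolding D_def .
qed

lemma leb_sf: "sigma_finite_measure (leb d)"
  unfolding leb_def
  by (rule product_sigma_finite.sigma_finite[OF psf]) auto

lemma dirichlet_expr:
  fixes f :: "(nat \<Rightarrow> real) \<Rightarrow> real" and \<phi> :: "(nat \<Rightarrow> real) \<Rightarrow> real"
  assumes Dm2: "(\<lambda>(x,y). ennreal (mala_prop d gf h x y * mala_acc d f gf h x y)) \<in> borel_measurable (leb d \<Otimes>\<^sub>M leb d)"
    and \<phi>m[measurable]: "\<phi> \<in> borel_measurable (leb d)"
    and fm[measurable]: "f \<in> borel_measurable (leb d)"
  shows "dirichlet_form (target d f) (mala_kernel d f gf h) \<phi> = (1/2) * (\<integral>\<^sup>+x. \<integral>\<^sup>+y.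
      ennreal (exp (- f x) / (\<integral>y. exp (- f y) \<partial>leb d)) *
      (ennreal (mala_prop d gf h x y * mala_acc d f gf h x y) * ennreal ((\<phi> x - \<phi> y)\<^sup>2)) \<partial>leb d \<partial>leb d)"
proof -
  define Z where "Z = (\<integral>y. exp (- f y) \<partial>leb d)"
  define D where "D = (\<lambda>x y. ennreal (mala_prop d gf h x y * mala_acc d f gf h x y))"
  interpret sf: sigma_finite_measure "leb d" by (rule leb_sf)
  have Dm2': "(\<lambda>(x,y). D x y) \<in> borel_measurable (leb d \<Otimes>\<^sub>M leb d)" using Dm2 by (simp add: D_def)
  have Gm: "(\<lambda>(x,y). D x y * ennreal ((\<phi> x - \<phi> y)\<^sup>2)) \<in> borel_measurable (leb d \<Otimes>\<^sub>M leb d)"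
  proof -
    have "(\<lambda>p. ennreal ((\<phi> (fst p) - \<phi> (snd p))\<^sup>2)) \<in> borel_measurable (leb d \<Otimes>\<^sub>M leb d)"
      by measurable
    with Dm2' show ?thesis by (simp add: case_prod_beta')
  qed
  have Wm: "(\<lambda>x. \<integral>\<^sup>+y. D x y * ennreal ((\<phi> x - \<phi> y)\<^sup>2) \<partial>leb d) \<in> borel_measurable (leb d)"
    using sf.borel_measurable_nn_integral[OF Gm] by simp
  have inner: "(\<integral>\<^sup>+y. ennreal ((\<phi> x - \<phi> y)\<^sup>2) \<partial>mala_kernel d f gf h x)
      = (\<integral>\<^sup>+y. D x y * ennreal ((\<phi> x - \<phi> y)\<^sup>2) \<partial>leb d)" if x: "x \<in> space (leb d)" for x
  proof -
    have "(\<lambda>y. D x y) \<in> borel_measurable (leb d)"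
      using measurable_Pair2[OF Dm2' x] by simp
    then show ?thesis unfolding D_def by (intro kernel_nn[OF x]) auto
  qed
  have qm: "(\<lambda>x. ennreal (exp (- f x) / Z)) \<in> borel_measurable (leb d)" by measurable
  have "dirichlet_form (target d f) (mala_kernel d f gf h) \<phi>
      = (1/2) * (\<integral>\<^sup>+x. (\<integral>\<^sup>+y. D x y * ennreal ((\<phi> x - \<phi> y)\<^sup>2) \<partial>leb d) \<partial>target d f)"
    unfolding dirichlet_form_def
    by (intro arg_cong2[where f="(*)"] refl nn_integral_cong) (simp add: inner target_def)
  also have "\<dots> = (1/2) * (\<integral>\<^sup>+x. ennreal (exp (- f x) / Z) * (\<integral>\<^sup>+y. D x y * ennreal ((\<phi> x - \<phi> y)\<^sup>2) \<partial>leb d) \<partial>leb d)"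
    unfolding target_def Z_def[symmetric] using qm Wm by (simp add: nn_integral_density)
  also have "\<dots> = (1/2) * (\<integral>\<^sup>+x. \<integral>\<^sup>+y. ennreal (exp (- f x) / Z) * (D x y * ennreal ((\<phi> x - \<phi> y)\<^sup>2)) \<partial>leb d \<partial>leb d)"
  proof -
    have "(\<lambda>y. D x y * ennreal ((\<phi> x - \<phi> y)\<^sup>2)) \<in> borel_measurable (leb d)" if "x \<in> space (leb d)" for x
      using measurable_Pair2[OF Gm that] by simp
    then show ?thesis by (intro arg_cong2[where f="(*)"] refl nn_integral_cong nn_integral_cmult[symmetric]) auto
  qed
  finally show ?thesis unfolding D_def Z_def .
qed

lemma min_le_sqrt: "0 \<le> u \<Longrightarrow> 0 \<le> v \<Longrightarrow> min u v \<le> sqrt (u * v)"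
proof -
  assume u: "0 \<le> u" and v: "0 \<le> v"
  show ?thesis
  proof (cases "u \<le> v")
    case True
    then have "(min u v)\<^sup>2 \<le> u * v" using u by (simp add: power2_eq_square mult_left_mono)
    then show ?thesis by (rule real_le_rsqrt)
  next
    case False
    then have "(min u v)\<^sup>2 \<le> u * v" using v by (simp add: power2_eq_square mult_right_mono)
    then show ?thesis by (rule real_le_rsqrt)
  qed
qed

lemma prop_nonneg: "0 \<le> mala_prop d gf h x y"
  unfolding mala_prop_def by simp

lemma acc_nonneg: "0 \<le> mala_acc d f gf h x y"
  unfolding mala_acc_def by simp

lemma acc_le1: "mala_acc d f gf h x y \<le> 1"
  unfolding mala_acc_def by simp

lemma acc_sqrt:
  assumes Z: "Z > 0" and h: "h > 0"
  shows "(exp (- f x) / Z) * (mala_prop d gf h x y * mala_acc d f gf h x y)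
    \<le> sqrt ((exp (- f x) / Z) * mala_prop d gf h x y * ((exp (- f y) / Z) * mala_prop d gf h y x))"
proof -
  define K where "K = (4 * pi * h) powr (- real d / 2)"
  define n1 where "n1 = sqnorm d (\<lambda>i. y i - x i + h * gf x i)"
  define n2 where "n2 = sqnorm d (\<lambda>i. x i - y i + h * gf y i)"
  define \<Delta> where "\<Delta> = f x - f y + (1 / (4 * h)) * (n1 - n2)"
  define u where "u = exp (- f x) / Z * mala_prop d gf h x y"
  define v where "v = exp (- f y) / Z * mala_prop d gf h y x"
  have pu: "mala_prop d gf h x y = K * exp (- n1 / (4 * h))" unfolding mala_prop_def K_def n1_def ..
  have pv: "mala_prop d gf h y x = K * exp (- n2 / (4 * h))" unfolding mala_prop_def K_def n2_def ..
  have acc: "mala_acc d f gf h x y = min 1 (exp \<Delta>)" unfolding mala_acc_def \<Delta>_def n1_def n2_def ..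
  have e: "exp (- f y) * exp (- n2 / (4 * h)) = exp (- f x) * exp (- n1 / (4 * h)) * exp \<Delta>"
    unfolding \<Delta>_def exp_add[symmetric] using h by (simp add: field_simps)
  have vu: "v = u * exp \<Delta>" unfolding u_def v_def pu pv using e
    by (simp add: field_simps)
  have u0: "0 \<le> u" unfolding u_def using Z by (simp add: prop_nonneg)
  have "(exp (- f x) / Z) * (mala_prop d gf h x y * mala_acc d f gf h x y) = u * min 1 (exp \<Delta>)"
    unfolding u_def acc by simp
  also have "\<dots> = min u v" unfolding vu using u0 by (simp add: min_mult_distrib_left)
  also have "\<dots> \<le> sqrt (u * v)" using u0 vu by (intro min_le_sqrt) auto
  finally show ?thesis unfolding u_def v_def by (simp add: mult.assoc)
qed

lemma var_formula:
  assumes "prob_space M" "integrable M \<phi>" "integrable M (\<lambda>x. (\<phi> x)\<^sup>2)"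
  shows "var M \<phi> = (\<integral>x. (\<phi> x)\<^sup>2 \<partial>M) - (\<integral>x. \<phi> x \<partial>M)\<^sup>2"
proof -
  interpret prob_space M by fact
  define m where "m = (\<integral>x. \<phi> x \<partial>M)"
  have "(\<lambda>x. (\<phi> x - m)\<^sup>2) = (\<lambda>x. ((\<phi> x)\<^sup>2 - 2 * m * \<phi> x) + m\<^sup>2)"
    by (simp add: power2_eq_square algebra_simps)
  then have "var M \<phi> = (\<integral>x. ((\<phi> x)\<^sup>2 - 2 * m * \<phi> x) + m\<^sup>2 \<partial>M)"
    unfolding var_def m_def by simp
  also have "\<dots> = (\<integral>x. (\<phi> x)\<^sup>2 \<partial>M) - 2 * m * m + m\<^sup>2"
    using assms(2,3) by (simp add: integral_add integral_diff m_def prob_space)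
  finally show ?thesis unfolding m_def by (simp add: power2_eq_square)
qed

lemma var_AE_const:
  assumes "prob_space M" "\<phi> \<in> borel_measurable M" "AE x in M. \<phi> x = c"
  shows "var M \<phi> = 0"
proof -
  interpret prob_space M by fact
  have m: "(\<integral>x. \<phi> x \<partial>M) = c"
    using integral_cong_AE[OF assms(2) borel_measurable_const assms(3)] by (simp add: prob_space)
  have "var M \<phi> = (\<integral>x. 0 \<partial>M)"
    unfolding var_def m using assms(2,3) by (intro integral_cong_AE) auto
  then show ?thesis by simp
qed

lemma gap_le:
  assumes "prob_space M" "\<phi> \<in> L2 M" "var M \<phi> > 0"
  shows "spectral_gap M T \<le> dirichlet_form M T \<phi> / ennreal (var M \<phi>)"
proof -
  have "\<not> (\<exists>c. AE x in M. \<phi> x = c)"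
    using var_AE_const[OF assms(1)] assms(2,3) by (force simp: L2_def)
  then show ?thesis unfolding spectral_gap_def using assms(2) by (intro INF_lower) auto
qed

lemma relax_ge:
  assumes "spectral_gap M T \<le> ennreal r" "r > 0" "B \<le> 1 / r"
  shows "relaxation_time M T \<ge> ennreal B"
proof (cases "spectral_gap M T")
  case (real g)
  show ?thesis
  proof (cases "g = 0")
    case True then show ?thesis unfolding relaxation_time_def real by simp
  next
    case False
    then have g: "g > 0" using real by simp
    have "g \<le> r" using assms(1) real assms(2) by (simp add: ennreal_le_iff)
    then have "1 / r \<le> 1 / g" using g by (simp add: frac_le)
    then have "B \<le> 1 / g" using assms(3) by simp
    then have "ennreal B \<le> ennreal (1 / g)" by (rule ennreal_leI)
    also have "ennreal (1 / g) = 1 / ennreal g" using divide_ennreal[of 1 g] g by simp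
    finally show ?thesis unfolding relaxation_time_def real .
  qed
next
  case top
  then have False using assms(1) by (simp add: top_unique)
  then show ?thesis ..
qed


lemma nd_nn1: "\<sigma> > 0 \<Longrightarrow> (\<integral>\<^sup>+b. ennreal (normal_density \<mu> \<sigma> b) \<partial>lborel) = 1"
  using nn_integral_eq_integral[OF integrable_normal_density[of \<sigma> \<mu>]] integral_normal_density[of \<sigma> \<mu>]
  by simp

lemma nd_sq_bochner:
  assumes s: "\<sigma> > 0"
  shows "has_bochner_integral lborel (\<lambda>b. normal_density \<mu> \<sigma> b * (a - b)\<^sup>2) (\<sigma>\<^sup>2 + (\<mu> - a)\<^sup>2)"
proof -
  have m2: "has_bochner_integral lborel (\<lambda>b. normal_density \<mu> \<sigma> b * (b - \<mu>) ^ (2 * 1)) (fact (2 * 1) / ((2 / \<sigma>\<^sup>2)^1 * fact 1))"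
    by (rule normal_moment_even[OF s])
  have m2': "has_bochner_integral lborel (\<lambda>b. normal_density \<mu> \<sigma> b * (b - \<mu>)\<^sup>2) (\<sigma>\<^sup>2)"
    using m2 s by simp
  have m1: "has_bochner_integral lborel (\<lambda>b. normal_density \<mu> \<sigma> b * (b - \<mu>) ^ (2 * 0 + 1)) 0"
    by (rule normal_moment_odd[OF s])
  have m1': "has_bochner_integral lborel (\<lambda>b. 2 * (\<mu> - a) * (normal_density \<mu> \<sigma> b * (b - \<mu>))) (2 * (\<mu> - a) * 0)"
    using m1 by (intro has_bochner_integral_mult_right) simp
  have m0: "has_bochner_integral lborel (\<lambda>b. (\<mu> - a)\<^sup>2 * normal_density \<mu> \<sigma> b) ((\<mu> - a)\<^sup>2 * 1)"
    using integrable_normal_density[OF s] integral_normal_density[OF s]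
    by (intro has_bochner_integral_mult_right) (simp add: has_bochner_integral_iff)
  have "has_bochner_integral lborel (\<lambda>b. normal_density \<mu> \<sigma> b * (b - \<mu>)\<^sup>2 + 2 * (\<mu> - a) * (normal_density \<mu> \<sigma> b * (b - \<mu>)) + (\<mu> - a)\<^sup>2 * normal_density \<mu> \<sigma> b)
     (\<sigma>\<^sup>2 + 2 * (\<mu> - a) * 0 + (\<mu> - a)\<^sup>2 * 1)"
    by (intro has_bochner_integral_add m2' m1' m0)
  moreover have "(\<lambda>b. normal_density \<mu> \<sigma> b * (b - \<mu>)\<^sup>2 + 2 * (\<mu> - a) * (normal_density \<mu> \<sigma> b * (b - \<mu>)) + (\<mu> - a)\<^sup>2 * normal_density \<mu> \<sigma> b)
     = (\<lambda>b. normal_density \<mu> \<sigma> b * (a - b)\<^sup>2)"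
    by (rule ext) (simp add: power2_eq_square algebra_simps)
  ultimately show ?thesis by simp
qed

lemma nd_sq_nn:
  assumes s: "\<sigma> > 0"
  shows "(\<integral>\<^sup>+b. ennreal (normal_density \<mu> \<sigma> b * (a - b)\<^sup>2) \<partial>lborel) = ennreal (\<sigma>\<^sup>2 + (\<mu> - a)\<^sup>2)"
  using nn_integral_eq_integral[OF integrable.intros[OF nd_sq_bochner[OF s]]]
    has_bochner_integral_integral_eq[OF nd_sq_bochner[OF s]] by simp

lemma nd0_sq_bochner:
  assumes s: "\<sigma> > 0"
  shows "has_bochner_integral lborel (\<lambda>b. normal_density 0 \<sigma> b * b\<^sup>2) (\<sigma>\<^sup>2)"
  using nd_sq_bochner[OF s, of 0 0] by simp

lemma nd0_lin_bochner:
  assumes s: "\<sigma> > 0"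
  shows "has_bochner_integral lborel (\<lambda>b. normal_density 0 \<sigma> b * b) 0"
  using normal_moment_odd[OF s, of 0 0] by simp

lemma nd0_quad_nn:
  assumes s: "\<sigma> > 0" and c: "c \<ge> 0" and k: "k \<ge> 0"
  shows "(\<integral>\<^sup>+a. ennreal (normal_density 0 \<sigma> a * (c + k * a\<^sup>2)) \<partial>lborel) = ennreal (c + k * \<sigma>\<^sup>2)"
proof -
  have h: "has_bochner_integral lborel (\<lambda>a. c * normal_density 0 \<sigma> a + k * (normal_density 0 \<sigma> a * a\<^sup>2)) (c * 1 + k * \<sigma>\<^sup>2)"
    using integrable_normal_density[OF s] integral_normal_density[OF s] nd0_sq_bochner[OF s]
    by (intro has_bochner_integral_add has_bochner_integral_mult_right) (auto simp add: has_bochner_integral_iff)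
  have e: "(\<lambda>a. c * normal_density 0 \<sigma> a + k * (normal_density 0 \<sigma> a * a\<^sup>2)) = (\<lambda>a. normal_density 0 \<sigma> a * (c + k * a\<^sup>2))"
    by (rule ext) (simp add: algebra_simps)
  have h': "has_bochner_integral lborel (\<lambda>a. normal_density 0 \<sigma> a * (c + k * a\<^sup>2)) (c + k * \<sigma>\<^sup>2)"
    using h unfolding e by simp
  show ?thesis
    using nn_integral_eq_integral[OF integrable.intros[OF h']] has_bochner_integral_integral_eq[OF h'] c k
    by simp
qed

lemma nd0_exp_bochner:
  assumes l: "l > 0" and k: "k \<ge> 0"
  shows "has_bochner_integral lborel (\<lambda>a. normal_density 0 (1 / sqrt l) a * exp (- k * a\<^sup>2)) (sqrt (l / (l + 2 * k)))"
proof -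
  have lk: "l / 2 + k > 0" using l k by simp
  have g: "has_bochner_integral lborel (\<lambda>a. exp (- (l / 2 + k) * a\<^sup>2 + 0 * a)) (sqrt (pi / (l / 2 + k)) * exp (0\<^sup>2 / (4 * (l / 2 + k))))"
    by (rule gauss_bochner[OF lk])
  have g2: "has_bochner_integral lborel (\<lambda>a. (1 / sqrt (2 * pi / l)) * exp (- (l / 2 + k) * a\<^sup>2 + 0 * a))
      ((1 / sqrt (2 * pi / l)) * (sqrt (pi / (l / 2 + k)) * exp (0\<^sup>2 / (4 * (l / 2 + k)))))"
    by (rule has_bochner_integral_mult_right[OF g])
  have e: "(\<lambda>a. (1 / sqrt (2 * pi / l)) * exp (- (l / 2 + k) * a\<^sup>2 + 0 * a)) = (\<lambda>a. normal_density 0 (1 / sqrt l) a * exp (- k * a\<^sup>2))"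
  proof
    fix a
    have "exp (- (l / 2 + k) * a\<^sup>2 + 0 * a) = exp (- (l/2) * a\<^sup>2) * exp (- k * a\<^sup>2)"
      by (simp add: exp_add[symmetric] algebra_simps)
    then show "(1 / sqrt (2 * pi / l)) * exp (- (l / 2 + k) * a\<^sup>2 + 0 * a) = normal_density 0 (1 / sqrt l) a * exp (- k * a\<^sup>2)"
      unfolding nd0_iso[OF l] by simp
  qed
  have v: "(1 / sqrt (2 * pi / l)) * (sqrt (pi / (l / 2 + k)) * exp (0\<^sup>2 / (4 * (l / 2 + k)))) = sqrt (l / (l + 2 * k))"
  proof -
    have "(1 / sqrt (2 * pi / l)) * sqrt (pi / (l / 2 + k)) = sqrt (pi / (l / 2 + k)) / sqrt (2 * pi / l)"
      by simp
    also have "\<dots> = sqrt ((pi / (l / 2 + k)) / (2 * pi / l))"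
      by (simp only: real_sqrt_divide)
    also have "(pi / (l / 2 + k)) / (2 * pi / l) = l / (l + 2 * k)"
    proof -
      have p: "l / 2 + k > 0" "l + 2 * k > 0" using l k by auto
      have "(pi / (l / 2 + k)) / (2 * pi / l) = (pi * l) / ((l / 2 + k) * (2 * pi))"
        by (simp add: divide_divide_eq_left divide_divide_eq_right)
      also have "(l / 2 + k) * (2 * pi) = pi * (l + 2 * k)" by (simp add: algebra_simps)
      also have "(pi * l) / (pi * (l + 2 * k)) = l / (l + 2 * k)" by simp
      finally show ?thesis .
    qed
    finally show ?thesis by simp
  qed
  show ?thesis using g2 unfolding e v .
qed

lemma f_iso_eq: "quad d (Aiso l) (\<lambda>_. 0) = (\<lambda>x. l / 2 * sqnorm d x)"
  by (rule ext) (rule quad_iso)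

lemma comp_leb: "i \<in> {..<d} \<Longrightarrow> (\<lambda>x. x i) \<in> borel_measurable (leb d)"
  unfolding leb_def using measurable_component_singleton[of i "{..<d}" "\<lambda>_. lborel"] by (simp add: measurable_lborel2)

lemma sqnorm_meas[measurable]: "sqnorm d \<in> borel_measurable (leb d)"
proof -
  note comp_leb[measurable]
  show ?thesis unfolding sqnorm_def[abs_def] by measurable
qed

lemma sq_gf: "sqnorm d (\<lambda>i. a i + h * quad_grad d (Aiso l) (\<lambda>_. 0) x i) = (\<Sum>i<d. (a i + h * (l * x i))\<^sup>2)"
  unfolding sqnorm_def quad_grad_iso by (intro sum.cong) auto

lemma acc_iso: "mala_acc d (quad d (Aiso l) (\<lambda>_. 0)) (quad_grad d (Aiso l) (\<lambda>_. 0)) h x y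
  = min 1 (exp (l / 2 * sqnorm d x - l / 2 * sqnorm d y + (1 / (4 * h)) *
      ((\<Sum>i<d. (y i - x i + h * (l * x i))\<^sup>2) - (\<Sum>i<d. (x i - y i + h * (l * y i))\<^sup>2))))"
  unfolding mala_acc_def f_iso_eq using sq_gf[where a="\<lambda>i. y i - x i"] sq_gf[where a="\<lambda>i. x i - y i"] by simp

lemma PA_meas:
  assumes h: "h > 0"
  shows "(\<lambda>(x,y). ennreal (mala_prop d (quad_grad d (Aiso l) (\<lambda>_. 0)) h x y *
          mala_acc d (quad d (Aiso l) (\<lambda>_. 0)) (quad_grad d (Aiso l) (\<lambda>_. 0)) h x y))
      \<in> borel_measurable (leb d \<Otimes>\<^sub>M leb d)"
proof -
  have "(\<lambda>p. ennreal (mala_prop d (quad_grad d (Aiso l) (\<lambda>_. 0)) h (fst p) (snd p) *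
          mala_acc d (quad d (Aiso l) (\<lambda>_. 0)) (quad_grad d (Aiso l) (\<lambda>_. 0)) h (fst p) (snd p)))
      \<in> borel_measurable (leb d \<Otimes>\<^sub>M leb d)"
  proof -
    note comp_leb[measurable]
    show ?thesis unfolding prop_iso[OF h] acc_iso unfolding sqnorm_def normal_density_def by measurable
  qed
  then show ?thesis by (simp add: case_prod_beta')
qed

lemma target_iso:
  assumes l: "l > 0"
  shows "target d (quad d (Aiso l) (\<lambda>_. 0)) = density (leb d) (\<lambda>x. ennreal (\<Prod>i<d. normal_density 0 (1 / sqrt l) (x i)))"
  unfolding target_def f_iso_eq q_iso[OF l] ..

lemma target_prob:
  assumes l: "l > 0"
  shows "prob_space (target d (quad d (Aiso l) (\<lambda>_. 0)))"
proof (rule prob_spaceI)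
  have sl: "1 / sqrt l > 0" using l by simp
  have "emeasure (target d (quad d (Aiso l) (\<lambda>_. 0))) (space (leb d))
      = (\<integral>\<^sup>+x. (\<Prod>i<d. ennreal (normal_density 0 (1 / sqrt l) (x i))) \<partial>leb d)"
  proof -
    note comp_leb[measurable]
    show ?thesis unfolding target_iso[OF l] by (subst emeasure_density) (auto simp: prod_ennreal intro!: nn_integral_cong)
  qed
  also have "\<dots> = (\<Prod>i<d. \<integral>\<^sup>+y. ennreal (normal_density 0 (1 / sqrt l) y) \<partial>lborel)"
    by (rule leb_prod_nn) simp
  also have "\<dots> = 1" using nd_nn1[OF sl] by simp
  finally show "emeasure (target d (quad d (Aiso l) (\<lambda>_. 0))) (space (target d (quad d (Aiso l) (\<lambda>_. 0)))) = 1"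
    by (simp add: target_def)
qed


abbreviation "fI d l \<equiv> quad d (Aiso l) (\<lambda>_. 0)"
abbreviation "gI d l \<equiv> quad_grad d (Aiso l) (\<lambda>_. 0)"

lemma fI_meas[measurable]: "fI d l \<in> borel_measurable (leb d)"
  unfolding f_iso_eq by measurable

lemma dir_iso:
  assumes l: "l > 0" and h: "h > 0" and \<phi>m: "\<phi> \<in> borel_measurable (leb d)"
  shows "dirichlet_form (target d (fI d l)) (mala_kernel d (fI d l) (gI d l) h) \<phi> = (1/2) * (\<integral>\<^sup>+x. \<integral>\<^sup>+y.
      ennreal (\<Prod>i<d. normal_density 0 (1 / sqrt l) (x i)) *
      (ennreal (mala_prop d (gI d l) h x y * mala_acc d (fI d l) (gI d l) h x y) * ennreal ((\<phi> x - \<phi> y)\<^sup>2)) \<partial>leb d \<partial>leb d)"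
proof -
  have q: "exp (- fI d l x) / (\<integral>y. exp (- fI d l y) \<partial>leb d) = (\<Prod>i<d. normal_density 0 (1 / sqrt l) (x i))" for x
    using q_iso[OF l, of d x] by (simp add: quad_iso)
  show ?thesis using dirichlet_expr[OF PA_meas[OF h] \<phi>m fI_meas[of d l]] by (simp only: q)
qed

lemma half_enn: "0 \<le> X \<Longrightarrow> (1/2::ennreal) * ennreal X = ennreal (X/2)"
proof -
  assume X: "0 \<le> X"
  have "ennreal (X/2) = ennreal X * ennreal (1/2)" using X by (subst ennreal_mult[symmetric]) auto
  also have "ennreal (1/2) = inverse 2" by (rule ennreal_half)
  also have "(inverse 2 :: ennreal) = 1/2" by (simp add: divide_ennreal_def)
  finally show ?thesis by (simp add: mult.commute)
qed

lemma regime1_E: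
  assumes l: "l > 0" and h: "h > 0" and d: "d > 0"
  shows "dirichlet_form (target d (fI d l)) (mala_kernel d (fI d l) (gI d l) h) (\<lambda>x. x 0) \<le> ennreal ((2*h + h\<^sup>2*l)/2)"
proof -
  define N0 where "N0 = (\<lambda>a. normal_density 0 (1 / sqrt l) a)"
  define P1 where "P1 = (\<lambda>a b. normal_density ((1 - h * l) * a) (sqrt (2 * h)) b)"
  define F where "F = (\<lambda>(i::nat) (a::real) (b::real). N0 a * P1 a b * (if i = 0 then (a - b)\<^sup>2 else 1))"
  have F0: "0 \<le> F i a b" for i a b unfolding F_def N0_def P1_def by simp
  have m0: "(\<lambda>x. x 0) \<in> borel_measurable (leb d)" using comp_leb[of 0 d] d by simp
  have pw: "ennreal (\<Prod>i<d. N0 (x i)) * (ennreal (mala_prop d (gI d l) h x y * mala_acc d (fI d l) (gI d l) h x y) * ennreal ((x 0 - y 0)\<^sup>2))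
      \<le> (\<Prod>i<d. ennreal (F i (x i) (y i)))" for x y
  proof -
    have P: "mala_prop d (gI d l) h x y = (\<Prod>i<d. P1 (x i) (y i))" unfolding prop_iso[OF h] P1_def ..
    have N0p: "0 \<le> (\<Prod>i<d. N0 (x i))" unfolding N0_def by (simp add: prod_nonneg)
    have Pp: "0 \<le> mala_prop d (gI d l) h x y" by (rule prop_nonneg)
    have "ennreal (\<Prod>i<d. N0 (x i)) * (ennreal (mala_prop d (gI d l) h x y * mala_acc d (fI d l) (gI d l) h x y) * ennreal ((x 0 - y 0)\<^sup>2))
        = ennreal ((\<Prod>i<d. N0 (x i)) * (mala_prop d (gI d l) h x y * mala_acc d (fI d l) (gI d l) h x y) * (x 0 - y 0)\<^sup>2)"
      using N0p Pp acc_nonneg by (simp add: ennreal_mult mult.assoc)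
    also have "\<dots> \<le> ennreal ((\<Prod>i<d. N0 (x i)) * mala_prop d (gI d l) h x y * (x 0 - y 0)\<^sup>2)"
    proof (rule ennreal_leI)
      have "mala_prop d (gI d l) h x y * mala_acc d (fI d l) (gI d l) h x y \<le> mala_prop d (gI d l) h x y"
        using Pp acc_le1 by (simp add: mult_left_le)
      then show "(\<Prod>i<d. N0 (x i)) * (mala_prop d (gI d l) h x y * mala_acc d (fI d l) (gI d l) h x y) * (x 0 - y 0)\<^sup>2
          \<le> (\<Prod>i<d. N0 (x i)) * mala_prop d (gI d l) h x y * (x 0 - y 0)\<^sup>2"
        using N0p by (intro mult_right_mono mult_left_mono) auto
    qed
    also have "(\<Prod>i<d. N0 (x i)) * mala_prop d (gI d l) h x y * (x 0 - y 0)\<^sup>2 = (\<Prod>i<d. F i (x i) (y i))"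
      unfolding P F_def prod.distrib using d by simp
    also have "ennreal (\<Prod>i<d. F i (x i) (y i)) = (\<Prod>i<d. ennreal (F i (x i) (y i)))"
      using F0 by (simp add: prod_ennreal)
    finally show ?thesis .
  qed
  have Fm: "(\<lambda>(a, b). ennreal (F i a b)) \<in> borel_measurable borel" for i
  proof -
    have "(\<lambda>(a, b). ennreal (F i a b)) \<in> borel_measurable (borel \<Otimes>\<^sub>M borel)"
      unfolding F_def N0_def P1_def normal_density_def by measurable
    then show ?thesis by (simp add: borel_prod)
  qed
  have V: "(\<integral>\<^sup>+a. \<integral>\<^sup>+b. ennreal (F i a b) \<partial>lborel \<partial>lborel) = (if i = 0 then ennreal (2*h + h\<^sup>2*l) else 1)" for i
  proof -
    have s: "sqrt (2 * h) > 0" "1 / sqrt l > 0" using h l by auto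
    have inner: "(\<integral>\<^sup>+b. ennreal (F i a b) \<partial>lborel) = ennreal (N0 a) * ennreal (if i = 0 then 2*h + (h*l)\<^sup>2 * a\<^sup>2 else 1)" for a
    proof -
      have "(\<integral>\<^sup>+b. ennreal (F i a b) \<partial>lborel) = (\<integral>\<^sup>+b. ennreal (N0 a) * ennreal (P1 a b * (if i = 0 then (a - b)\<^sup>2 else 1)) \<partial>lborel)"
        unfolding F_def N0_def P1_def by (intro nn_integral_cong) (simp add: ennreal_mult[symmetric] mult.assoc)
      also have "\<dots> = ennreal (N0 a) * (\<integral>\<^sup>+b. ennreal (P1 a b * (if i = 0 then (a - b)\<^sup>2 else 1)) \<partial>lborel)"
        unfolding P1_def normal_density_def by (rule nn_integral_cmult) measurable
      also have "(\<integral>\<^sup>+b. ennreal (P1 a b * (if i = 0 then (a - b)\<^sup>2 else 1)) \<partial>lborel) = ennreal (if i = 0 then 2*h + (h*l)\<^sup>2 * a\<^sup>2 else 1)"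
      proof (cases "i = 0")
        case True
        have "((1 - h * l) * a - a)\<^sup>2 = (h*l)\<^sup>2 * a\<^sup>2" by (simp add: power2_eq_square algebra_simps)
        then show ?thesis using True nd_sq_nn[OF s(1), of "(1 - h * l) * a" a] h unfolding P1_def by simp
      next
        case False
        then show ?thesis using nd_nn1[OF s(1), of "(1 - h * l) * a"] unfolding P1_def by simp
      qed
      finally show ?thesis .
    qed
    have "(\<integral>\<^sup>+a. \<integral>\<^sup>+b. ennreal (F i a b) \<partial>lborel \<partial>lborel) = (\<integral>\<^sup>+a. ennreal (N0 a * (if i = 0 then 2*h + (h*l)\<^sup>2 * a\<^sup>2 else 1)) \<partial>lborel)"
      unfolding inner using h by (intro nn_integral_cong) (simp add: ennreal_mult N0_def)
    also have "\<dots> = (if i = 0 then ennreal (2*h + h\<^sup>2*l) else 1)"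
    proof (cases "i = 0")
      case True
      have "(1 / sqrt l)\<^sup>2 = 1 / l" using l by (simp add: power_divide)
      then have "2*h + (h*l)\<^sup>2 * (1 / sqrt l)\<^sup>2 = 2*h + h\<^sup>2*l" using l by (simp add: power2_eq_square)
      then show ?thesis using True nd0_quad_nn[OF s(2), of "2*h" "(h*l)\<^sup>2"] h unfolding N0_def by simp
    next
      case False
      then show ?thesis using nd_nn1[OF s(2), of 0] unfolding N0_def by simp
    qed
    finally show ?thesis .
  qed
  have "dirichlet_form (target d (fI d l)) (mala_kernel d (fI d l) (gI d l) h) (\<lambda>x. x 0)
      \<le> (1/2) * (\<integral>\<^sup>+x. \<integral>\<^sup>+y. (\<Prod>i<d. ennreal (F i (x i) (y i))) \<partial>leb d \<partial>leb d)"
    unfolding dir_iso[OF l h m0] N0_def[symmetric]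
    by (intro mult_left_mono nn_integral_mono pw) auto
  also have "\<dots> = (1/2) * (\<Prod>i<d. \<integral>\<^sup>+a. \<integral>\<^sup>+b. ennreal (F i a b) \<partial>lborel \<partial>lborel)"
    by (subst leb_prod_nn2[where F="\<lambda>i a b. ennreal (F i a b)"]) (use Fm in auto)
  also have "\<dots> = (1/2) * ennreal (2*h + h\<^sup>2*l)"
    unfolding V using d by simp
  also have "\<dots> = ennreal ((2*h + h\<^sup>2*l)/2)"
    using h l by (intro half_enn) simp
  finally show ?thesis .
qed

lemma leb_prod_hbi:
  fixes G :: "nat \<Rightarrow> real \<Rightarrow> real"
  assumes "\<And>i. i < d \<Longrightarrow> has_bochner_integral lborel (G i) (v i)"
  shows "has_bochner_integral (leb d) (\<lambda>x. \<Prod>i<d. G i (x i)) (\<Prod>i<d. v i)"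
proof -
  have int: "\<And>i. i < d \<Longrightarrow> integrable lborel (G i)" using assms by (simp add: has_bochner_integral_iff)
  have val: "\<And>i. i < d \<Longrightarrow> integral\<^sup>L lborel (G i) = v i" using assms by (simp add: has_bochner_integral_iff)
  show ?thesis unfolding has_bochner_integral_iff
    using leb_prod_int[OF int] val by simp
qed

lemma target_integral:
  assumes l: "l > 0" and \<phi>m: "\<phi> \<in> borel_measurable (leb d)"
    and H: "has_bochner_integral (leb d) (\<lambda>x. (\<Prod>i<d. normal_density 0 (1 / sqrt l) (x i)) * \<phi> x) v"
  shows "integrable (target d (fI d l)) \<phi>" "(\<integral>x. \<phi> x \<partial>target d (fI d l)) = v"
proof -
  note comp_leb[measurable]
  have gm: "(\<lambda>x. \<Prod>i<d. normal_density 0 (1 / sqrt l) (x i)) \<in> borel_measurable (leb d)"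
    unfolding normal_density_def by measurable
  have g0: "AE x in leb d. 0 \<le> (\<Prod>i<d. normal_density 0 (1 / sqrt l) (x i))" by (simp add: prod_nonneg)
  show "integrable (target d (fI d l)) \<phi>"
    unfolding target_iso[OF l] using integrable_density[OF \<phi>m gm g0] H by (simp add: has_bochner_integral_iff)
  show "(\<integral>x. \<phi> x \<partial>target d (fI d l)) = v"
    unfolding target_iso[OF l] using integral_density[OF \<phi>m gm g0] H by (simp add: has_bochner_integral_iff)
qed

lemma regime1_var:
  assumes l: "l > 0" and d: "d > 0"
  shows "(\<lambda>x. x 0) \<in> L2 (target d (fI d l))" "var (target d (fI d l)) (\<lambda>x. x 0) = 1 / l"
proof -
  define N0 where "N0 = (\<lambda>a. normal_density 0 (1 / sqrt l) a)"
  have s: "1 / sqrt l > 0" using l by simp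
  have m0: "(\<lambda>x. x 0) \<in> borel_measurable (leb d)" using comp_leb[of 0 d] d by simp
  have m1: "(\<lambda>x. (x 0)\<^sup>2) \<in> borel_measurable (leb d)" using m0 by measurable
  have H1: "has_bochner_integral (leb d) (\<lambda>x. (\<Prod>i<d. N0 (x i)) * x 0) (\<Prod>i<d. if i = 0 then 0 else 1)"
  proof -
    have "has_bochner_integral (leb d) (\<lambda>x. \<Prod>i<d. (\<lambda>a. N0 a * (if i = 0 then a else 1)) (x i)) (\<Prod>i<d. if i = 0 then 0 else 1)"
      using nd0_lin_bochner[OF s] integrable_normal_density[OF s] integral_normal_density[OF s]
      by (intro leb_prod_hbi) (auto simp: N0_def has_bochner_integral_iff)
    moreover have "(\<Prod>i<d. (\<lambda>a. N0 a * (if i = 0 then a else 1)) (x i)) = (\<Prod>i<d. N0 (x i)) * x 0" for x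
      using d by (simp add: prod.distrib)
    ultimately show ?thesis by simp
  qed
  have H2: "has_bochner_integral (leb d) (\<lambda>x. (\<Prod>i<d. N0 (x i)) * (x 0)\<^sup>2) (\<Prod>i<d. if i = 0 then (1 / sqrt l)\<^sup>2 else 1)"
  proof -
    have "has_bochner_integral (leb d) (\<lambda>x. \<Prod>i<d. (\<lambda>a. N0 a * (if i = 0 then a\<^sup>2 else 1)) (x i)) (\<Prod>i<d. if i = 0 then (1 / sqrt l)\<^sup>2 else 1)"
      using nd0_sq_bochner[OF s] integrable_normal_density[OF s] integral_normal_density[OF s]
      by (intro leb_prod_hbi) (auto simp: N0_def has_bochner_integral_iff)
    moreover have "(\<Prod>i<d. (\<lambda>a. N0 a * (if i = 0 then a\<^sup>2 else 1)) (x i)) = (\<Prod>i<d. N0 (x i)) * (x 0)\<^sup>2" for x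
      using d by (simp add: prod.distrib)
    ultimately show ?thesis by simp
  qed
  have p1: "(\<Prod>i<d. if i = 0 then (0::real) else 1) = 0" using d by simp
  have p2: "(\<Prod>i<d. if i = 0 then (1 / sqrt l)\<^sup>2 else 1) = 1 / l" using d l by (simp add: power_divide)
  note I1 = target_integral[OF l m0 H1[unfolded N0_def p1]]
  note I2 = target_integral[OF l m1 H2[unfolded N0_def p2]]
  show "(\<lambda>x. x 0) \<in> L2 (target d (fI d l))"
    unfolding L2_def using m0 I2(1) by (simp add: target_def)
  show "var (target d (fI d l)) (\<lambda>x. x 0) = 1 / l"
    using var_formula[OF target_prob[OF l] I1(1) I2(1)] I1(2) I2(2) by simp
qed


lemma sqrt_prod: "sqrt (\<Prod>i\<in>I. f i) = (\<Prod>i\<in>I. sqrt (f i))"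
  by (induction I rule: infinite_finite_induct) (auto simp: real_sqrt_mult)

lemma sqrt_sq_exp: "K \<ge> 0 \<Longrightarrow> sqrt (K\<^sup>2 * exp (2 * Y)) = K * exp Y"
proof -
  assume K: "K \<ge> 0"
  have "K\<^sup>2 * exp (2 * Y) = (K * exp Y)\<^sup>2" by (simp add: power2_eq_square exp_add[symmetric] algebra_simps)
  then show ?thesis using K by simp
qed

context
  fixes l h :: real
  assumes l: "l > 0" and h: "h > 0"
begin

definition "cc = 1 - h * l"
definition "a0 = l / 4 + (1 + cc\<^sup>2) / (8 * h)"
definition "dd = cc / (4 * h)"
definition "KK = (1 / sqrt (2 * pi / l)) * (1 / sqrt (4 * pi * h))"
definition "N0 = (\<lambda>a. normal_density 0 (1 / sqrt l) a)"
definition "P1 = (\<lambda>a b. normal_density (cc * a) (sqrt (2 * h)) b)"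

lemma P1_exp: "P1 a b = (1 / sqrt (4 * pi * h)) * exp (- (1 / (4 * h)) * (b - cc * a)\<^sup>2)"
proof -
  have s2: "(sqrt (2 * h))\<^sup>2 = 2 * h" using h by simp
  have x: "2 * pi * (2 * h) = 4 * pi * h" by simp
  have y: "- w / (2 * (2 * h)) = - (1 / (4*h)) * w" for w by simp
  show ?thesis unfolding P1_def normal_density_def s2 x y ..
qed

lemma S1_form: "sqrt (N0 a * P1 a b * N0 b * P1 b a) = KK * exp (- (a0 * a\<^sup>2 + a0 * b\<^sup>2 - 2 * dd * a * b))"
proof -
  have e: "N0 a * P1 a b * N0 b * P1 b a = KK\<^sup>2 * exp (2 * (- (a0 * a\<^sup>2 + a0 * b\<^sup>2 - 2 * dd * a * b)))"
  proof -
    have "N0 a * P1 a b * N0 b * P1 b a = KK\<^sup>2 * (exp (- (l/2) * a\<^sup>2) * exp (- (1 / (4 * h)) * (b - cc * a)\<^sup>2)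
        * exp (- (l/2) * b\<^sup>2) * exp (- (1 / (4 * h)) * (a - cc * b)\<^sup>2))"
      unfolding N0_def nd0_iso[OF l] P1_exp KK_def by (simp add: power2_eq_square)
    also have "exp (- (l/2) * a\<^sup>2) * exp (- (1 / (4 * h)) * (b - cc * a)\<^sup>2)
        * exp (- (l/2) * b\<^sup>2) * exp (- (1 / (4 * h)) * (a - cc * b)\<^sup>2)
        = exp (- (l/2) * a\<^sup>2 + - (1 / (4 * h)) * (b - cc * a)\<^sup>2 + - (l/2) * b\<^sup>2 + - (1 / (4 * h)) * (a - cc * b)\<^sup>2)"
      by (simp only: exp_add)
    also have "- (l/2) * a\<^sup>2 + - (1 / (4 * h)) * (b - cc * a)\<^sup>2 + - (l/2) * b\<^sup>2 + - (1 / (4 * h)) * (a - cc * b)\<^sup>2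
        = 2 * (- (a0 * a\<^sup>2 + a0 * b\<^sup>2 - 2 * dd * a * b))"
      unfolding a0_def dd_def using h by (simp add: field_simps power2_eq_square)
    finally show ?thesis .
  qed
  have K0: "KK \<ge> 0" unfolding KK_def using l h by simp
  show ?thesis unfolding e by (rule sqrt_sq_exp[OF K0])
qed

lemma a0_pos: "a0 > 0"
  unfolding a0_def using l h by (simp add: add_pos_nonneg)

lemma a0_dd: "a0\<^sup>2 - dd\<^sup>2 \<ge> 0"
proof -
  have "a0 - dd = l / 4 + (1 - cc)\<^sup>2 / (8 * h)" unfolding a0_def dd_def using h
    by (simp add: field_simps power2_eq_square)
  moreover have "a0 + dd = l / 4 + (1 + cc)\<^sup>2 / (8 * h)" unfolding a0_def dd_def using h
    by (simp add: field_simps power2_eq_square)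
  ultimately have "a0 - dd \<ge> 0" "a0 + dd \<ge> 0" using l h by auto
  then have "(a0 - dd) * (a0 + dd) \<ge> 0" by simp
  then show ?thesis by (simp add: power2_eq_square algebra_simps)
qed

definition "DD = (a0 + 2 * l) * a0 - dd\<^sup>2"

lemma DD_pos: "DD > 0"
proof -
  have p: "0 < l * a0" using l a0_pos by simp
  have "DD = (a0\<^sup>2 - dd\<^sup>2) + 2 * (l * a0)" unfolding DD_def by (simp add: algebra_simps power2_eq_square)
  then show ?thesis using p a0_dd by linarith
qed

lemma DD_eq: "DD = l * (5 + 2 * (h * l)\<^sup>2) / (8 * h) + h\<^sup>2 * l^4 / 64"
  unfolding DD_def a0_def dd_def cc_def using h
  by (simp add: field_simps power2_eq_square) (simp add: algebra_simps power4_eq_xxxx)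

definition "II = KK * pi / sqrt DD"

lemma II_bound: "II \<le> 1 / sqrt (5 + 2 * (h * l)\<^sup>2)"
proof -
  have K2: "KK\<^sup>2 * pi\<^sup>2 = l / (8 * h)"
    unfolding KK_def using l h by (simp add: power2_eq_square real_sqrt_divide field_simps)
  have "(KK * pi)\<^sup>2 * (5 + 2 * (h * l)\<^sup>2) \<le> DD"
    unfolding DD_eq power_mult_distrib K2 using h l by (simp add: field_simps)
  then have "(KK * pi)\<^sup>2 \<le> DD / (5 + 2 * (h * l)\<^sup>2)" by (simp add: field_simps add_pos_nonneg)
  then have "KK * pi \<le> sqrt (DD / (5 + 2 * (h * l)\<^sup>2))" by (rule real_le_rsqrt)
  then have "KK * pi / sqrt DD \<le> sqrt (DD / (5 + 2 * (h * l)\<^sup>2)) / sqrt DD"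
    using DD_pos by (simp add: divide_right_mono)
  also have "\<dots> = 1 / sqrt (5 + 2 * (h * l)\<^sup>2)"
    using DD_pos by (simp add: real_sqrt_divide)
  finally show ?thesis unfolding II_def .
qed

definition "FF1 = (\<lambda>a b. exp (- (2 * l) * a\<^sup>2) * sqrt (N0 a * P1 a b * N0 b * P1 b a))"
definition "FF2 = (\<lambda>a b. exp (- (2 * l) * b\<^sup>2) * sqrt (N0 a * P1 a b * N0 b * P1 b a))"

lemma FF_nonneg: "0 \<le> FF1 a b" "0 \<le> FF2 a b"
  unfolding FF1_def FF2_def N0_def P1_def by auto

lemma FF_meas: "(\<lambda>(a, b). ennreal (FF1 a b)) \<in> borel_measurable borel" "(\<lambda>(a, b). ennreal (FF2 a b)) \<in> borel_measurable borel"
proof -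
  have "(\<lambda>(a, b). ennreal (FF1 a b)) \<in> borel_measurable (borel \<Otimes>\<^sub>M borel)"
    unfolding FF1_def N0_def P1_def normal_density_def by measurable
  then show "(\<lambda>(a, b). ennreal (FF1 a b)) \<in> borel_measurable borel" by (simp add: borel_prod)
  have "(\<lambda>(a, b). ennreal (FF2 a b)) \<in> borel_measurable (borel \<Otimes>\<^sub>M borel)"
    unfolding FF2_def N0_def P1_def normal_density_def by measurable
  then show "(\<lambda>(a, b). ennreal (FF2 a b)) \<in> borel_measurable borel" by (simp add: borel_prod)
qed

lemma dbl_K:
  assumes "\<alpha> > 0" "\<beta> > 0" "\<alpha> * \<beta> > \<delta>\<^sup>2"
  shows "(\<integral>\<^sup>+a. \<integral>\<^sup>+b. ennreal KK * ennreal (exp (- (\<alpha> * a\<^sup>2 + \<beta> * b\<^sup>2 - 2 * \<delta> * a * b))) \<partial>lborel \<partial>lborel)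
     = ennreal KK * ennreal (pi / sqrt (\<alpha> * \<beta> - \<delta>\<^sup>2))"
proof -
  have pm: "(\<lambda>(a, b). ennreal (exp (- (\<alpha> * a\<^sup>2 + \<beta> * b\<^sup>2 - 2 * \<delta> * a * b)))) \<in> borel_measurable (lborel \<Otimes>\<^sub>M lborel)"
  proof -
    have "(\<lambda>(a, b). ennreal (exp (- (\<alpha> * a\<^sup>2 + \<beta> * b\<^sup>2 - 2 * \<delta> * a * b)))) \<in> borel_measurable (borel \<Otimes>\<^sub>M borel)"
      by measurable
    then show ?thesis
      by (simp add: measurable_cong_sets[OF sets_pair_measure_cong[OF sets_lborel sets_lborel] refl])
  qed
  have "(\<integral>\<^sup>+a. \<integral>\<^sup>+b. ennreal KK * ennreal (exp (- (\<alpha> * a\<^sup>2 + \<beta> * b\<^sup>2 - 2 * \<delta> * a * b))) \<partial>lborel \<partial>lborel)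
     = (\<integral>\<^sup>+a. ennreal KK * \<integral>\<^sup>+b. ennreal (exp (- (\<alpha> * a\<^sup>2 + \<beta> * b\<^sup>2 - 2 * \<delta> * a * b))) \<partial>lborel \<partial>lborel)"
    by (intro nn_integral_cong nn_integral_cmult) measurable
  also have "\<dots> = ennreal KK * (\<integral>\<^sup>+a. \<integral>\<^sup>+b. ennreal (exp (- (\<alpha> * a\<^sup>2 + \<beta> * b\<^sup>2 - 2 * \<delta> * a * b))) \<partial>lborel \<partial>lborel)"
    using lborel.borel_measurable_nn_integral[OF pm] by (intro nn_integral_cmult) simp
  also have "\<dots> = ennreal KK * ennreal (pi / sqrt (\<alpha> * \<beta> - \<delta>\<^sup>2))"
    by (simp only: master2[OF assms])
  finally show ?thesis .
qed

lemma int_FF: "(\<integral>\<^sup>+a. \<integral>\<^sup>+b. ennreal (FF1 a b) \<partial>lborel \<partial>lborel) = ennreal II"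
    "(\<integral>\<^sup>+a. \<integral>\<^sup>+b. ennreal (FF2 a b) \<partial>lborel \<partial>lborel) = ennreal II"
proof -
  have K0: "KK \<ge> 0" unfolding KK_def using l h by simp
  have DDa: "(a0 + 2 * l) * a0 > dd\<^sup>2" "a0 * (a0 + 2 * l) > dd\<^sup>2" using DD_pos unfolding DD_def by (auto simp: mult.commute)
  have p: "a0 + 2 * l > 0" using a0_pos l by simp
  have II': "ennreal KK * ennreal (pi / sqrt DD) = ennreal II"
    unfolding II_def using K0 DD_pos by (simp add: ennreal_mult[symmetric])
  have e1: "ennreal (FF1 a b) = ennreal KK * ennreal (exp (- ((a0 + 2 * l) * a\<^sup>2 + a0 * b\<^sup>2 - 2 * dd * a * b)))" for a b
  proof -
    have "FF1 a b = KK * exp (- ((a0 + 2 * l) * a\<^sup>2 + a0 * b\<^sup>2 - 2 * dd * a * b))"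
      unfolding FF1_def S1_form by (simp add: exp_add[symmetric] algebra_simps)
    then show ?thesis using K0 by (simp add: ennreal_mult)
  qed
  have e2: "ennreal (FF2 a b) = ennreal KK * ennreal (exp (- (a0 * a\<^sup>2 + (a0 + 2 * l) * b\<^sup>2 - 2 * dd * a * b)))" for a b
  proof -
    have "FF2 a b = KK * exp (- (a0 * a\<^sup>2 + (a0 + 2 * l) * b\<^sup>2 - 2 * dd * a * b))"
      unfolding FF2_def S1_form by (simp add: exp_add[symmetric] algebra_simps)
    then show ?thesis using K0 by (simp add: ennreal_mult)
  qed
  show "(\<integral>\<^sup>+a. \<integral>\<^sup>+b. ennreal (FF1 a b) \<partial>lborel \<partial>lborel) = ennreal II"
    unfolding e1 dbl_K[OF p a0_pos DDa(1)] DD_def[symmetric] II' ..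
  show "(\<integral>\<^sup>+a. \<integral>\<^sup>+b. ennreal (FF2 a b) \<partial>lborel \<partial>lborel) = ennreal II"
    unfolding e2 dbl_K[OF a0_pos p DDa(2)] using II' by (simp add: DD_def mult.commute)
qed

lemma prod_meas_y:
  assumes "\<And>a. (\<lambda>b. F a b) \<in> borel_measurable borel"
  shows "(\<lambda>y. \<Prod>i<d. ennreal (F (x i) (y i))) \<in> borel_measurable (leb d)"
proof -
  note comp_leb[measurable]
  have [measurable]: "(\<lambda>y. F (x i) (y i)) \<in> borel_measurable (leb d)" if "i \<in> {..<d}" for i
    using measurable_compose[OF comp_leb[OF that] assms[of "x i"]] by simp
  show ?thesis by measurable
qed

lemma regime2_E:
  "dirichlet_form (target d (fI d l)) (mala_kernel d (fI d l) (gI d l) h) (\<lambda>x. exp (- (l * sqnorm d x)))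
    \<le> ennreal (2 * II ^ d)"
proof -
  define \<phi> where "\<phi> = (\<lambda>x. exp (- (l * sqnorm d x)))"
  define A1 where "A1 = (\<lambda>x y. \<Prod>i<d. ennreal (FF1 (x i) (y i)))"
  define A2 where "A2 = (\<lambda>x y. \<Prod>i<d. ennreal (FF2 (x i) (y i)))"
  have \<phi>m: "\<phi> \<in> borel_measurable (leb d)" unfolding \<phi>_def by measurable
  have Zpos: "(\<integral>y. exp (- fI d l y) \<partial>leb d) > 0"
    using Z_iso(1)[OF l, of d] l by (simp add: quad_iso)
  have pw: "ennreal (\<Prod>i<d. normal_density 0 (1 / sqrt l) (x i)) *
      (ennreal (mala_prop d (gI d l) h x y * mala_acc d (fI d l) (gI d l) h x y) * ennreal ((\<phi> x - \<phi> y)\<^sup>2))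
      \<le> 2 * (A1 x y + A2 x y)" for x y
  proof -
    define q where "q = (\<lambda>x. \<Prod>i<d. N0 (x i))"
    have q_eq: "q z = exp (- fI d l z) / (\<integral>y. exp (- fI d l y) \<partial>leb d)" for z
      unfolding q_def N0_def using q_iso[OF l, of d z] by (simp add: quad_iso)
    have q0: "0 \<le> q z" for z unfolding q_def N0_def by (simp add: prod_nonneg)
    have PA0: "0 \<le> mala_prop d (gI d l) h x y * mala_acc d (fI d l) (gI d l) h x y"
      using prop_nonneg acc_nonneg by simp
    have S: "q x * (mala_prop d (gI d l) h x y * mala_acc d (fI d l) (gI d l) h x y)
        \<le> (\<Prod>i<d. sqrt (N0 (x i) * P1 (x i) (y i) * N0 (y i) * P1 (y i) (x i)))"
    proof -
      have "q x * (mala_prop d (gI d l) h x y * mala_acc d (fI d l) (gI d l) h x y)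
          \<le> sqrt (q x * mala_prop d (gI d l) h x y * (q y * mala_prop d (gI d l) h y x))"
        unfolding q_eq by (rule acc_sqrt[OF Zpos h])
      also have "q x * mala_prop d (gI d l) h x y * (q y * mala_prop d (gI d l) h y x)
          = (\<Prod>i<d. N0 (x i) * P1 (x i) (y i) * N0 (y i) * P1 (y i) (x i))"
        unfolding q_def prop_iso[OF h] P1_def cc_def by (simp add: prod.distrib mult_ac)
      finally show ?thesis by (simp add: sqrt_prod)
    qed
    have E: "exp (- (2 * l) * sqnorm d z) = (\<Prod>i<d. exp (- (2 * l) * (z i)\<^sup>2))" for z
      using exp_sqnorm[of "2 * l" d z] by simp
    have phi2: "(\<phi> z)\<^sup>2 = exp (- (2 * l) * sqnorm d z)" for z
      unfolding \<phi>_def by (simp add: power2_eq_square exp_add[symmetric])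
    have sq: "(\<phi> x - \<phi> y)\<^sup>2 \<le> 2 * (\<phi> x)\<^sup>2 + 2 * (\<phi> y)\<^sup>2"
    proof -
      have "2 * (\<phi> x)\<^sup>2 + 2 * (\<phi> y)\<^sup>2 - (\<phi> x - \<phi> y)\<^sup>2 = (\<phi> x + \<phi> y)\<^sup>2"
        by (simp add: power2_eq_square algebra_simps)
      moreover have "(\<phi> x + \<phi> y)\<^sup>2 \<ge> 0" by simp
      ultimately show ?thesis by linarith
    qed
    define SS where "SS = (\<Prod>i<d. sqrt (N0 (x i) * P1 (x i) (y i) * N0 (y i) * P1 (y i) (x i)))"
    have SS0: "0 \<le> SS" unfolding SS_def N0_def P1_def by (simp add: prod_nonneg)
    have "q x * (mala_prop d (gI d l) h x y * mala_acc d (fI d l) (gI d l) h x y) * (\<phi> x - \<phi> y)\<^sup>2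
        \<le> SS * (2 * (\<phi> x)\<^sup>2 + 2 * (\<phi> y)\<^sup>2)"
      using S sq q0 PA0 SS0 unfolding SS_def[symmetric] by (intro mult_mono) auto
    also have "\<dots> = 2 * ((\<Prod>i<d. FF1 (x i) (y i)) + (\<Prod>i<d. FF2 (x i) (y i)))"
      unfolding SS_def phi2 E FF1_def FF2_def by (simp add: prod.distrib algebra_simps)
    finally have R: "q x * (mala_prop d (gI d l) h x y * mala_acc d (fI d l) (gI d l) h x y) * (\<phi> x - \<phi> y)\<^sup>2
        \<le> 2 * ((\<Prod>i<d. FF1 (x i) (y i)) + (\<Prod>i<d. FF2 (x i) (y i)))" .
    have F10: "0 \<le> FF1 a b" "0 \<le> FF2 a b" for a b by (rule FF_nonneg)+
    have "ennreal (\<Prod>i<d. normal_density 0 (1 / sqrt l) (x i)) *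
      (ennreal (mala_prop d (gI d l) h x y * mala_acc d (fI d l) (gI d l) h x y) * ennreal ((\<phi> x - \<phi> y)\<^sup>2))
      = ennreal (q x * (mala_prop d (gI d l) h x y * mala_acc d (fI d l) (gI d l) h x y) * (\<phi> x - \<phi> y)\<^sup>2)"
    proof -
      have e1: "ennreal (mala_prop d (gI d l) h x y * mala_acc d (fI d l) (gI d l) h x y) * ennreal ((\<phi> x - \<phi> y)\<^sup>2)
          = ennreal ((mala_prop d (gI d l) h x y * mala_acc d (fI d l) (gI d l) h x y) * (\<phi> x - \<phi> y)\<^sup>2)"
        by (rule ennreal_mult[symmetric]) (use PA0 in auto)
      have e2: "ennreal (q x) * ennreal ((mala_prop d (gI d l) h x y * mala_acc d (fI d l) (gI d l) h x y) * (\<phi> x - \<phi> y)\<^sup>2)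
          = ennreal (q x * ((mala_prop d (gI d l) h x y * mala_acc d (fI d l) (gI d l) h x y) * (\<phi> x - \<phi> y)\<^sup>2))"
        by (rule ennreal_mult[symmetric]) (use q0 PA0 in auto)
      show ?thesis using e2 unfolding e1 N0_def[symmetric] q_def by (simp only: mult.assoc)
    qed
    also have "\<dots> \<le> ennreal (2 * ((\<Prod>i<d. FF1 (x i) (y i)) + (\<Prod>i<d. FF2 (x i) (y i))))"
      using R by (rule ennreal_leI)
    also have "\<dots> = 2 * (A1 x y + A2 x y)"
    proof -
      have p: "0 \<le> (\<Prod>i<d. FF1 (x i) (y i))" "0 \<le> (\<Prod>i<d. FF2 (x i) (y i))"
        using F10 by (simp_all add: prod_nonneg)
      have "ennreal (2 * ((\<Prod>i<d. FF1 (x i) (y i)) + (\<Prod>i<d. FF2 (x i) (y i))))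
          = ennreal 2 * ennreal ((\<Prod>i<d. FF1 (x i) (y i)) + (\<Prod>i<d. FF2 (x i) (y i)))"
        by (rule ennreal_mult) (use p in auto)
      also have "ennreal ((\<Prod>i<d. FF1 (x i) (y i)) + (\<Prod>i<d. FF2 (x i) (y i)))
          = ennreal (\<Prod>i<d. FF1 (x i) (y i)) + ennreal (\<Prod>i<d. FF2 (x i) (y i))"
        by (rule ennreal_plus) (use p in auto)
      also have "ennreal (\<Prod>i<d. FF1 (x i) (y i)) = A1 x y"
        unfolding A1_def by (rule prod_ennreal[symmetric]) (use F10 in auto)
      also have "ennreal (\<Prod>i<d. FF2 (x i) (y i)) = A2 x y"
        unfolding A2_def by (rule prod_ennreal[symmetric]) (use F10 in auto)
      finally show ?thesis by simp
    qed
    finally show ?thesis .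
  qed
  have FFa: "(\<lambda>b. FF1 a b) \<in> borel_measurable borel" "(\<lambda>b. FF2 a b) \<in> borel_measurable borel" for a
  proof -
    have p1: "(\<lambda>(a, b). ennreal (FF1 a b)) \<in> borel_measurable (borel \<Otimes>\<^sub>M borel)"
      using FF_meas(1) by (simp add: borel_prod)
    have p2: "(\<lambda>(a, b). ennreal (FF2 a b)) \<in> borel_measurable (borel \<Otimes>\<^sub>M borel)"
      using FF_meas(2) by (simp add: borel_prod)
    have "(\<lambda>b. ennreal (FF1 a b)) \<in> borel_measurable borel" using measurable_Pair2[OF p1, of a] by simp
    then show "(\<lambda>b. FF1 a b) \<in> borel_measurable borel" using FF_nonneg(1) by simp
    have "(\<lambda>b. ennreal (FF2 a b)) \<in> borel_measurable borel" using measurable_Pair2[OF p2, of a] by simp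
    then show "(\<lambda>b. FF2 a b) \<in> borel_measurable borel" using FF_nonneg(2) by simp
  qed
  have my1: "A1 x \<in> borel_measurable (leb d)" for x unfolding A1_def by (rule prod_meas_y) (rule FFa(1))
  have my2: "A2 x \<in> borel_measurable (leb d)" for x unfolding A2_def by (rule prod_meas_y) (rule FFa(2))
  have mx1: "(\<lambda>x. \<integral>\<^sup>+y. A1 x y \<partial>leb d) \<in> borel_measurable (leb d)"
  proof -
    have "(\<lambda>x. \<integral>\<^sup>+y. A1 x y \<partial>leb d) = (\<lambda>x. \<Prod>i<d. \<integral>\<^sup>+b. ennreal (FF1 (x i) b) \<partial>lborel)"
      unfolding A1_def using FFa(1) by (intro ext leb_prod_nn) simp
    also have "\<dots> \<in> borel_measurable (leb d)"
    proof -
      have "(\<lambda>a. \<integral>\<^sup>+b. ennreal (FF1 a b) \<partial>lborel) \<in> borel_measurable borel"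
      proof -
        have "(\<lambda>(a, b). ennreal (FF1 a b)) \<in> borel_measurable (lborel \<Otimes>\<^sub>M lborel)"
          using FF_meas(1) by (simp add: lborel_prod measurable_lborel1)
        from lborel.borel_measurable_nn_integral[OF this] show ?thesis by simp
      qed
      note comp_leb[measurable] this[measurable]
      show ?thesis by measurable
    qed
    finally show ?thesis .
  qed
  have mx2: "(\<lambda>x. \<integral>\<^sup>+y. A2 x y \<partial>leb d) \<in> borel_measurable (leb d)"
  proof -
    have "(\<lambda>x. \<integral>\<^sup>+y. A2 x y \<partial>leb d) = (\<lambda>x. \<Prod>i<d. \<integral>\<^sup>+b. ennreal (FF2 (x i) b) \<partial>lborel)"
      unfolding A2_def using FFa(2) by (intro ext leb_prod_nn) simp
    also have "\<dots> \<in> borel_measurable (leb d)"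
    proof -
      have "(\<lambda>a. \<integral>\<^sup>+b. ennreal (FF2 a b) \<partial>lborel) \<in> borel_measurable borel"
      proof -
        have "(\<lambda>(a, b). ennreal (FF2 a b)) \<in> borel_measurable (lborel \<Otimes>\<^sub>M lborel)"
          using FF_meas(2) by (simp add: lborel_prod measurable_lborel1)
        from lborel.borel_measurable_nn_integral[OF this] show ?thesis by simp
      qed
      note comp_leb[measurable] this[measurable]
      show ?thesis by measurable
    qed
    finally show ?thesis .
  qed
  have I1: "(\<integral>\<^sup>+x. \<integral>\<^sup>+y. A1 x y \<partial>leb d \<partial>leb d) = ennreal II ^ d"
    unfolding A1_def by (subst leb_prod_nn2[where F="\<lambda>i a b. ennreal (FF1 a b)"]) (use FF_meas int_FF in auto)
  have I2: "(\<integral>\<^sup>+x. \<integral>\<^sup>+y. A2 x y \<partial>leb d \<partial>leb d) = ennreal II ^ d"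
    unfolding A2_def by (subst leb_prod_nn2[where F="\<lambda>i a b. ennreal (FF2 a b)"]) (use FF_meas int_FF in auto)
  have J: "(\<integral>\<^sup>+x. \<integral>\<^sup>+y. 2 * (A1 x y + A2 x y) \<partial>leb d \<partial>leb d) = 2 * (ennreal II ^ d + ennreal II ^ d)"
  proof -
    have "(\<integral>\<^sup>+x. \<integral>\<^sup>+y. 2 * (A1 x y + A2 x y) \<partial>leb d \<partial>leb d)
        = (\<integral>\<^sup>+x. 2 * ((\<integral>\<^sup>+y. A1 x y \<partial>leb d) + (\<integral>\<^sup>+y. A2 x y \<partial>leb d)) \<partial>leb d)"
      using my1 my2 by (intro nn_integral_cong) (simp add: nn_integral_cmult nn_integral_add)
    also have "\<dots> = 2 * ((\<integral>\<^sup>+x. \<integral>\<^sup>+y. A1 x y \<partial>leb d \<partial>leb d) + (\<integral>\<^sup>+x. \<integral>\<^sup>+y. A2 x y \<partial>leb d \<partial>leb d))"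
      using mx1 mx2 by (simp add: nn_integral_cmult nn_integral_add)
    finally show ?thesis unfolding I1 I2 .
  qed
  have K: "(1/2) * (2 * (ennreal II ^ d + ennreal II ^ d)) = ennreal (2 * II ^ d)"
  proof -
    have II0: "0 \<le> II" unfolding II_def KK_def using l h DD_pos by simp
    have "(1/2::ennreal) * (2 * (ennreal II ^ d + ennreal II ^ d)) = ennreal II ^ d + ennreal II ^ d"
    proof -
      have h2: "(1/2::ennreal) * 2 = 1" using half_enn[of 2] by simp
      show ?thesis by (simp only: mult.assoc[symmetric] h2 mult_1)
    qed
    also have "\<dots> = ennreal (II ^ d) + ennreal (II ^ d)" using II0 by (simp only: ennreal_power)
    also have "\<dots> = ennreal (II ^ d + II ^ d)" using II0 by (intro ennreal_plus[symmetric]) simp_all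
    also have "\<dots> = ennreal (2 * II ^ d)" by (simp only: mult_2)
    finally show ?thesis .
  qed
  have "dirichlet_form (target d (fI d l)) (mala_kernel d (fI d l) (gI d l) h) \<phi>
      \<le> (1/2) * (\<integral>\<^sup>+x. \<integral>\<^sup>+y. 2 * (A1 x y + A2 x y) \<partial>leb d \<partial>leb d)"
    unfolding dir_iso[OF l h \<phi>m] by (intro mult_left_mono nn_integral_mono pw) auto
  then show ?thesis unfolding J K \<phi>_def .
qed

end


lemma regime2_var:
  assumes l: "l > 0" and d: "d > 0"
  shows "(\<lambda>x. exp (- (l * sqnorm d x))) \<in> L2 (target d (fI d l))"
    "var (target d (fI d l)) (\<lambda>x. exp (- (l * sqnorm d x))) = sqrt (1/5) ^ d - (1/3) ^ d"
proof -
  define N0 where "N0 = (\<lambda>a. normal_density 0 (1 / sqrt l) a)"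
  have m0: "(\<lambda>x. exp (- (l * sqnorm d x))) \<in> borel_measurable (leb d)" by measurable
  have m1: "(\<lambda>x. (exp (- (l * sqnorm d x)))\<^sup>2) \<in> borel_measurable (leb d)" by measurable
  have v1: "sqrt (l / (l + 2 * l)) = sqrt (1/3)" using l by simp
  have v2: "sqrt (l / (l + 2 * (2 * l))) = sqrt (1/5)" using l by simp
  have H1: "has_bochner_integral (leb d) (\<lambda>x. (\<Prod>i<d. N0 (x i)) * exp (- (l * sqnorm d x))) (\<Prod>i<d. sqrt (1/3))"
  proof -
    have "has_bochner_integral (leb d) (\<lambda>x. \<Prod>i<d. (\<lambda>a. N0 a * exp (- l * a\<^sup>2)) (x i)) (\<Prod>i<d. sqrt (1/3))"
      using nd0_exp_bochner[OF l, of l] l v1 by (intro leb_prod_hbi) (simp add: N0_def)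
    moreover have "(\<Prod>i<d. (\<lambda>a. N0 a * exp (- l * a\<^sup>2)) (x i)) = (\<Prod>i<d. N0 (x i)) * exp (- (l * sqnorm d x))" for x
      by (simp add: prod.distrib exp_sqnorm)
    ultimately show ?thesis by simp
  qed
  have H2: "has_bochner_integral (leb d) (\<lambda>x. (\<Prod>i<d. N0 (x i)) * (exp (- (l * sqnorm d x)))\<^sup>2) (\<Prod>i<d. sqrt (1/5))"
  proof -
    have l2: "2 * l \<ge> 0" using l by simp
    have "has_bochner_integral (leb d) (\<lambda>x. \<Prod>i<d. (\<lambda>a. N0 a * exp (- (2 * l) * a\<^sup>2)) (x i)) (\<Prod>i<d. sqrt (1/5))"
      using nd0_exp_bochner[OF l l2] v2 l by (intro leb_prod_hbi) (simp add: N0_def)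
    moreover have "(\<Prod>i<d. (\<lambda>a. N0 a * exp (- (2 * l) * a\<^sup>2)) (x i)) = (\<Prod>i<d. N0 (x i)) * (exp (- (l * sqnorm d x)))\<^sup>2" for x
    proof -
      have "(exp (- (l * sqnorm d x)))\<^sup>2 = exp (- ((2 * l) * sqnorm d x))"
        by (simp add: power2_eq_square exp_add[symmetric])
      then show ?thesis by (simp add: prod.distrib exp_sqnorm)
    qed
    ultimately show ?thesis by simp
  qed
  note I1 = target_integral[OF l m0 H1[unfolded N0_def]]
  note I2 = target_integral[OF l m1 H2[unfolded N0_def]]
  show "(\<lambda>x. exp (- (l * sqnorm d x))) \<in> L2 (target d (fI d l))"
    unfolding L2_def using m0 I2(1) by (simp add: target_def)
  have "var (target d (fI d l)) (\<lambda>x. exp (- (l * sqnorm d x))) = sqrt (1/5) ^ d - (sqrt (1/3) ^ d)\<^sup>2"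
    using var_formula[OF target_prob[OF l] I1(1) I2(1)] I1(2) I2(2) by simp
  also have "(sqrt (1/3) ^ d)\<^sup>2 = ((1/3::real)) ^ d"
    by (simp add: power_mult_distrib[symmetric] power_mult[symmetric] mult.commute[of d] power_mult)
  finally show "var (target d (fI d l)) (\<lambda>x. exp (- (l * sqnorm d x))) = sqrt (1/5) ^ d - (1/3) ^ d" .
qed

lemma lnd_bound: "x \<ge> 1 \<Longrightarrow> ln x \<le> 2 * sqrt x"
proof -
  assume x: "x \<ge> 1"
  have "ln (sqrt x) \<le> sqrt x - 1" using x by (intro ln_le_minus_one) simp
  then show ?thesis using x by (simp add: ln_sqrt)
qed

lemma pow_key:
  fixes d :: nat
  assumes d: "real d \<ge> 10000" and z0: "z \<ge> 0" and zb: "z * real d \<ge> 1440 * ln (real d)"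
  shows "real d ^ 10 \<le> (1 + z) ^ d"
proof -
  have dp: "real d > 0" using d by simp
  have L0: "ln (real d) > 0" using d by simp
  have sd: "sqrt (real d) \<ge> 100"
  proof -
    have "sqrt 10000 \<le> sqrt (real d)" using d by (rule real_sqrt_le_mono)
    moreover have "sqrt (10000::real) = 100" by (simp add: real_sqrt_eq_iff)
    ultimately show ?thesis by simp
  qed
  have key: "10 * ln (real d) \<le> real d * ln (1 + z)"
  proof (cases "z \<ge> 1/2")
    case True
    have "1/2 - (1/2)\<^sup>2 \<le> ln (1 + (1/2::real))" by (rule ln_one_plus_pos_lower_bound) auto
    also have "\<dots> \<le> ln (1 + z)" using True by simp
    finally have lz: "1/4 \<le> ln (1 + z)" by (simp add: power2_eq_square)
    have "10 * ln (real d) \<le> 20 * sqrt (real d)" using lnd_bound[of "real d"] d by simp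
    also have "\<dots> \<le> real d / 4"
    proof -
      have e: "sqrt (real d) * sqrt (real d) = real d" using dp by simp
      have "80 * sqrt (real d) \<le> sqrt (real d) * sqrt (real d)" using sd by (intro mult_right_mono) auto
      then show ?thesis unfolding e by linarith
    qed
    also have "\<dots> \<le> real d * ln (1 + z)" using lz dp by (simp add: mult_left_mono)
    finally show ?thesis .
  next
    case False
    then have zh: "z \<le> 1/2" by simp
    have "z - z\<^sup>2 \<le> ln (1 + z)" using z0 zh by (intro ln_one_plus_pos_lower_bound) auto
    moreover have "z\<^sup>2 \<le> z / 2"
    proof -
      have "z * z \<le> (1/2) * z" using z0 zh by (intro mult_right_mono) auto
      then show ?thesis by (simp add: power2_eq_square)
    qed
    ultimately have "z / 2 \<le> ln (1 + z)" by simp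
    then have "real d * (z / 2) \<le> real d * ln (1 + z)" using dp by (simp add: mult_left_mono)
    moreover have "10 * ln (real d) \<le> real d * (z / 2)" using zb L0 by (simp add: mult.commute)
    ultimately show ?thesis by simp
  qed
  have e10: "ln (real d ^ 10) = 10 * ln (real d)" by (simp add: ln_realpow)
  have "real d ^ 10 = exp (10 * ln (real d))" unfolding e10[symmetric] using dp by simp
  also have "\<dots> \<le> exp (real d * ln (1 + z))" using key by simp
  also have "\<dots> = (1 + z) ^ d" using z0 by (simp add: ln_realpow[symmetric])
  finally show ?thesis .
qed

lemma II_pos: "0 < l \<Longrightarrow> 0 < h \<Longrightarrow> II l h > 0"
  using DD_pos[of l h] by (simp add: II_def KK_def)

lemma sqrt_ge100: "real d \<ge> 10000 \<Longrightarrow> sqrt (real d) \<ge> 100"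
proof -
  assume d: "real d \<ge> 10000"
  have "sqrt 10000 \<le> sqrt (real d)" using d by (rule real_sqrt_le_mono)
  moreover have "sqrt (10000::real) = 100" by (simp add: real_sqrt_eq_iff)
  ultimately show ?thesis by simp
qed

theorem theorem1:
  "\<exists>c::real. c > 0 \<and> (\<exists>d0::nat. \<forall>d::nat. \<forall>\<kappa>::real. \<forall>h::real.
     d \<ge> d0 \<longrightarrow> 10 \<le> \<kappa> \<longrightarrow> \<kappa> \<le> real d ^ 4 \<longrightarrow> h > 0 \<longrightarrow>
     (\<exists>(A :: nat \<Rightarrow> nat \<Rightarrow> real) (b :: nat \<Rightarrow> real).
        (\<forall>i<d. \<forall>j<d. A i j = A j i) \<and>
        (\<forall>v. sqnorm d v \<le> (\<Sum>i<d. \<Sum>j<d. A i j * v i * v j)) \<and>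
        (\<forall>v. (\<Sum>i<d. \<Sum>j<d. A i j * v i * v j) \<le> \<kappa> * sqnorm d v) \<and>
        relaxation_time (target d (quad d A b))
          (mala_kernel d (quad d A b) (quad_grad d A b) h)
        \<ge> ennreal (c * \<kappa> * sqrt (real d) / sqrt (ln (real d)))))"
proof (intro exI[of _ "1/100::real"] conjI)
  show "(1/100::real) > 0" by simp
  show "\<exists>d0::nat. \<forall>d::nat. \<forall>\<kappa>::real. \<forall>h::real.
     d \<ge> d0 \<longrightarrow> 10 \<le> \<kappa> \<longrightarrow> \<kappa> \<le> real d ^ 4 \<longrightarrow> h > 0 \<longrightarrow>
     (\<exists>(A :: nat \<Rightarrow> nat \<Rightarrow> real) (b :: nat \<Rightarrow> real).
        (\<forall>i<d. \<forall>j<d. A i j = A j i) \<and>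
        (\<forall>v. sqnorm d v \<le> (\<Sum>i<d. \<Sum>j<d. A i j * v i * v j)) \<and>
        (\<forall>v. (\<Sum>i<d. \<Sum>j<d. A i j * v i * v j) \<le> \<kappa> * sqnorm d v) \<and>
        relaxation_time (target d (quad d A b))
          (mala_kernel d (quad d A b) (quad_grad d A b) h)
        \<ge> ennreal (1/100 * \<kappa> * sqrt (real d) / sqrt (ln (real d))))"
  proof (intro exI[of _ "10000::nat"] allI impI)
    fix d :: nat and \<kappa> h :: real
    assume dd: "10000 \<le> d" and k1: "10 \<le> \<kappa>" and k2: "\<kappa> \<le> real d ^ 4" and h: "0 < h"
    define L where "L = ln (real d)"
    have rd: "real d \<ge> 10000" using dd by simp
    have dpos: "d > 0" using dd by simp
    have kpos: "\<kappa> > 0" using k1 by simp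
    have L1: "L \<ge> 1"
    proof -
      have "exp 1 \<le> real d" using exp_le rd by linarith
      then show ?thesis unfolding L_def using rd by (subst ln_ge_iff) auto
    qed
    have L2: "L \<le> 2 * sqrt (real d)" unfolding L_def using lnd_bound[of "real d"] rd by simp
    have sd: "sqrt (real d) \<ge> 100" using sqrt_ge100[OF rd] .
    have sde: "sqrt (real d) * sqrt (real d) = real d" by simp
    have sL: "sqrt L \<ge> 1" using L1 by simp
    define B where "B = 1/100 * \<kappa> * sqrt (real d) / sqrt L"
    have Bpos: "B > 0" unfolding B_def using kpos sd sL dpos by (intro divide_pos_pos mult_pos_pos) auto
    have sqnn: "sqnorm d v \<ge> 0" for v unfolding sqnorm_def by (simp add: sum_nonneg)
    have eqB: "1/100 * \<kappa> * sqrt (real d) / sqrt (ln (real d)) = B" unfolding B_def L_def ..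
    show "\<exists>(A :: nat \<Rightarrow> nat \<Rightarrow> real) (b :: nat \<Rightarrow> real).
        (\<forall>i<d. \<forall>j<d. A i j = A j i) \<and>
        (\<forall>v. sqnorm d v \<le> (\<Sum>i<d. \<Sum>j<d. A i j * v i * v j)) \<and>
        (\<forall>v. (\<Sum>i<d. \<Sum>j<d. A i j * v i * v j) \<le> \<kappa> * sqnorm d v) \<and>
        relaxation_time (target d (quad d A b))
          (mala_kernel d (quad d A b) (quad_grad d A b) h)
        \<ge> ennreal (1/100 * \<kappa> * sqrt (real d) / sqrt (ln (real d)))"
    proof (cases "h \<le> 60 * sqrt L / (\<kappa> * sqrt (real d))")
      case True
      define r where "r = (2*h + h\<^sup>2*1)/2"
      have rpos: "r > 0" unfolding r_def using h by (simp add: add_pos_nonneg)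
      have gap: "spectral_gap (target d (fI d 1)) (mala_kernel d (fI d 1) (gI d 1) h) \<le> ennreal r"
      proof -
        have v: "var (target d (fI d 1)) (\<lambda>x. x 0) = 1" using regime1_var(2)[of 1 d] dpos by simp
        have "spectral_gap (target d (fI d 1)) (mala_kernel d (fI d 1) (gI d 1) h)
            \<le> dirichlet_form (target d (fI d 1)) (mala_kernel d (fI d 1) (gI d 1) h) (\<lambda>x. x 0) / ennreal (var (target d (fI d 1)) (\<lambda>x. x 0))"
          by (rule gap_le[OF target_prob regime1_var(1)]) (use dpos v in simp_all)
        also have "\<dots> \<le> ennreal r" unfolding v r_def using regime1_E[of 1 h d] h dpos by (simp add: divide_ennreal_def)
        finally show ?thesis .
      qed
      have Bb: "B \<le> 1 / r"
      proof -
        have "36 * L \<le> real d"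
        proof -
          have "72 * sqrt (real d) \<le> sqrt (real d) * sqrt (real d)" using sd by (intro mult_right_mono) auto
          then show ?thesis using L2 sde by linarith
        qed
        then have "sqrt (36 * L) \<le> sqrt (real d)" by (rule real_sqrt_le_mono)
        then have "6 * sqrt L \<le> sqrt (real d)" by (simp add: real_sqrt_mult)
        moreover have "10 * sqrt (real d) \<le> \<kappa> * sqrt (real d)" using k1 by (intro mult_right_mono) auto
        ultimately have "60 * sqrt L \<le> \<kappa> * sqrt (real d)" by linarith
        moreover have ksd: "\<kappa> * sqrt (real d) > 0" using kpos dpos by (intro mult_pos_pos) auto
        ultimately have H01: "60 * sqrt L / (\<kappa> * sqrt (real d)) \<le> 1" by (simp add: divide_le_eq)
        have h1: "h \<le> 1" using True H01 by linarith
        have "h\<^sup>2 \<le> h" using h h1 by (simp add: power2_eq_square mult_left_le)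
        then have r32: "r \<le> 3/2 * h" unfolding r_def by simp
        have BH: "B * (60 * sqrt L / (\<kappa> * sqrt (real d))) = 3/5"
          unfolding B_def using kpos sd sL dpos by (simp add: field_simps)
        have "B * r \<le> B * (3/2 * h)" using r32 Bpos by (intro mult_left_mono) auto
        also have "\<dots> \<le> B * (3/2 * (60 * sqrt L / (\<kappa> * sqrt (real d))))" using True Bpos by (intro mult_left_mono) auto
        also have "\<dots> = 3/2 * (B * (60 * sqrt L / (\<kappa> * sqrt (real d))))" by (rule mult.left_commute)
        also have "\<dots> = 9/10" unfolding BH by simp
        finally have "B * r \<le> 1" by simp
        then show ?thesis using rpos by (simp add: le_divide_eq)
      qed
      have relax: "relaxation_time (target d (fI d 1)) (mala_kernel d (fI d 1) (gI d 1) h) \<ge> ennreal B"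
        by (rule relax_ge[OF gap rpos Bb])
      show ?thesis
      proof (intro exI[of _ "Aiso 1"] exI[of _ "\<lambda>_. 0"] conjI allI impI)
        show "Aiso 1 i j = Aiso 1 j i" for i j by (simp add: Aiso_def)
        show "sqnorm d v \<le> (\<Sum>i<d. \<Sum>j<d. Aiso 1 i j * v i * v j)" for v by (simp add: quad_form_iso)
        show "(\<Sum>i<d. \<Sum>j<d. Aiso 1 i j * v i * v j) \<le> \<kappa> * sqnorm d v" for v
        proof -
          have "1 * sqnorm d v \<le> \<kappa> * sqnorm d v" using sqnn[of v] k1 by (intro mult_right_mono) auto
          then show ?thesis by (simp add: quad_form_iso)
        qed
        show "ennreal (1/100 * \<kappa> * sqrt (real d) / sqrt (ln (real d))) \<le> relaxation_time (target d (fI d 1)) (mala_kernel d (fI d 1) (gI d 1) h)"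
          unfolding eqB by (rule relax)
      qed
    next
      case False
      define t where "t = h * \<kappa>"
      define z where "z = 2 * t\<^sup>2 / 5"
      define v where "v = sqrt (1/5) ^ d - (1/3::real) ^ d"
      define u where "u = sqrt (1/5::real)"
      have tpos: "t > 0" unfolding t_def using h kpos by simp
      have z0: "z \<ge> 0" unfolding z_def by simp
      have Hlt: "60 * sqrt L / (\<kappa> * sqrt (real d)) < h" using False by simp
      have ksd: "\<kappa> * sqrt (real d) > 0" using kpos dpos by (intro mult_pos_pos) auto
      have "60 * sqrt L < h * (\<kappa> * sqrt (real d))"
        using Hlt ksd by (simp add: divide_less_eq)
      then have "60 * sqrt L < t * sqrt (real d)" unfolding t_def by (simp add: mult_ac)
      then have "(60 * sqrt L)\<^sup>2 < (t * sqrt (real d))\<^sup>2" using sL by (intro power_strict_mono) auto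
      then have "3600 * L < t\<^sup>2 * real d" using L1 by (simp add: power_mult_distrib)
      then have zb: "z * real d \<ge> 1440 * ln (real d)" unfolding z_def L_def by (simp add: mult.commute)
      have pk: "real d ^ 10 \<le> (1 + z) ^ d" by (rule pow_key[OF rd z0 zb])
      have d5: "real d ^ 5 \<le> sqrt (1 + z) ^ d"
      proof -
        have "sqrt (real d ^ 10) \<le> sqrt ((1 + z) ^ d)" using pk by (rule real_sqrt_le_mono)
        moreover have "sqrt (real d ^ 10) = real d ^ 5"
        proof -
          have e: "real d ^ 10 = (real d ^ 5)\<^sup>2" by (simp flip: power_mult)
          show ?thesis unfolding e real_sqrt_abs by simp
        qed
        ultimately show ?thesis by (simp add: real_sqrt_power)
      qed
      have vpos: "v > 0"
      proof -
        have "(1/3::real) < sqrt (1/5)" by (rule real_less_rsqrt) (simp add: power2_eq_square)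
        then have "(1/3::real) ^ d < sqrt (1/5) ^ d" using dpos by (intro power_strict_mono) auto
        then show ?thesis unfolding v_def by simp
      qed
      have vlow: "u ^ d / 4 \<le> v"
      proof -
        define \<rho> where "\<rho> = sqrt 5 / 3"
        have urho: "u * \<rho> = 1/3" unfolding u_def \<rho>_def by (simp add: real_sqrt_divide)
        have r1: "\<rho> \<le> 3/4"
        proof -
          have "sqrt 5 \<le> sqrt ((9/4::real)\<^sup>2)" by (rule real_sqrt_le_mono) (simp add: power2_eq_square)
          then have "sqrt 5 \<le> 9/4" by simp
          then show ?thesis unfolding \<rho>_def by simp
        qed
        have r0: "\<rho> \<ge> 0" unfolding \<rho>_def by simp
        have rd1: "\<rho> ^ d \<le> \<rho>" using power_decreasing[of 1 d \<rho>] r0 r1 dpos by simp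
        have "(1/3::real) ^ d = u ^ d * \<rho> ^ d" unfolding urho[symmetric] by (rule power_mult_distrib)
        moreover have "u ^ d * \<rho> ^ d \<le> u ^ d * (3/4)"
          using rd1 r1 by (intro mult_left_mono) (auto simp: u_def)
        ultimately show ?thesis unfolding v_def u_def by simp
      qed
      define r where "r = 2 * II \<kappa> h ^ d / v"
      have IIp: "II \<kappa> h > 0" using II_pos kpos h by simp
      have rpos: "r > 0" unfolding r_def using IIp vpos by simp
      have gap: "spectral_gap (target d (fI d \<kappa>)) (mala_kernel d (fI d \<kappa>) (gI d \<kappa>) h) \<le> ennreal r"
      proof -
        have vv: "var (target d (fI d \<kappa>)) (\<lambda>x. exp (- (\<kappa> * sqnorm d x))) = v"
          unfolding v_def using regime2_var(2)[OF kpos dpos] .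
        have "spectral_gap (target d (fI d \<kappa>)) (mala_kernel d (fI d \<kappa>) (gI d \<kappa>) h)
            \<le> dirichlet_form (target d (fI d \<kappa>)) (mala_kernel d (fI d \<kappa>) (gI d \<kappa>) h) (\<lambda>x. exp (- (\<kappa> * sqnorm d x)))
               / ennreal (var (target d (fI d \<kappa>)) (\<lambda>x. exp (- (\<kappa> * sqnorm d x))))"
          by (rule gap_le[OF target_prob[OF kpos] regime2_var(1)[OF kpos dpos]]) (use vv vpos in simp)
        also have "\<dots> \<le> ennreal (2 * II \<kappa> h ^ d) / ennreal v"
          unfolding vv by (rule divide_right_mono_ennreal) (rule regime2_E[OF kpos h])
        also have "\<dots> = ennreal r" unfolding r_def using IIp vpos by (simp add: divide_ennreal)
        finally show ?thesis .
      qed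
      have Bb: "B \<le> 1 / r"
      proof -
        define \<rho> where "\<rho> = 1 / sqrt (5 + 2 * t\<^sup>2)"
        have IIb: "II \<kappa> h \<le> \<rho>" unfolding \<rho>_def t_def using II_bound[OF kpos h] by (simp add: mult.commute)
        have IId: "II \<kappa> h ^ d \<le> \<rho> ^ d" using IIb IIp by (intro power_mono) auto
        have rq: "\<rho> * sqrt (1 + z) = u"
        proof -
          define w where "w = 5 + 2 * t\<^sup>2"
          have wp: "w > 0" unfolding w_def by (simp add: add_pos_nonneg)
          have "1 + z = w / 5" unfolding z_def w_def by simp
          then have "sqrt (1 + z) = sqrt w / sqrt 5" by (simp only: real_sqrt_divide)
          moreover have "\<rho> = 1 / sqrt w" unfolding \<rho>_def w_def ..
          moreover have "u = 1 / sqrt 5" unfolding u_def by (simp add: real_sqrt_divide)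
          ultimately show ?thesis using wp by simp
        qed
        have Bd: "B \<le> real d ^ 5 / 100"
        proof -
          define X where "X = 1/100 * \<kappa> * sqrt (real d)"
          have X0: "X \<ge> 0" unfolding X_def using kpos by simp
          have sLp: "sqrt L > 0" using sL by simp
          have "X * 1 \<le> X * sqrt L" using X0 sL by (intro mult_left_mono) auto
          then have "X / sqrt L \<le> X" using sLp by (simp add: divide_le_eq)
          then have B1: "B \<le> X" unfolding B_def X_def .
          have sdd: "sqrt (real d) \<le> real d"
          proof -
            have "1 * sqrt (real d) \<le> sqrt (real d) * sqrt (real d)" using sd dpos by (intro mult_right_mono) auto
            then show ?thesis using sde by simp
          qed
          have "X \<le> 1/100 * real d ^ 4 * real d" unfolding X_def
            using k2 kpos sd sdd by (intro mult_mono) auto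
          also have "\<dots> = real d ^ 5 / 100" by (simp add: numeral_eq_Suc mult_ac)
          finally show ?thesis using B1 by simp
        qed
        have "B * (2 * II \<kappa> h ^ d) \<le> (real d ^ 5 / 100) * (2 * \<rho> ^ d)"
          using Bd IId Bpos IIp by (intro mult_mono) auto
        also have "\<dots> \<le> (sqrt (1 + z) ^ d / 100) * (2 * \<rho> ^ d)"
          using d5 unfolding \<rho>_def by (intro mult_right_mono) auto
        also have "\<dots> = (\<rho> * sqrt (1 + z)) ^ d / 50"
          by (simp add: power_mult_distrib)
        also have "\<dots> = u ^ d / 50" unfolding rq ..
        also have "\<dots> \<le> v" using vlow vpos unfolding u_def by simp
        finally have "B * (2 * II \<kappa> h ^ d) \<le> v" .
        moreover have "2 * II \<kappa> h ^ d > 0" using IIp by simp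
        ultimately have "B \<le> v / (2 * II \<kappa> h ^ d)" by (simp add: pos_le_divide_eq)
        then show ?thesis unfolding r_def by simp
      qed
      have relax: "relaxation_time (target d (fI d \<kappa>)) (mala_kernel d (fI d \<kappa>) (gI d \<kappa>) h) \<ge> ennreal B"
        by (rule relax_ge[OF gap rpos Bb])
      show ?thesis
      proof (intro exI[of _ "Aiso \<kappa>"] exI[of _ "\<lambda>_. 0"] conjI allI impI)
        show "Aiso \<kappa> i j = Aiso \<kappa> j i" for i j by (simp add: Aiso_def)
        show "sqnorm d v \<le> (\<Sum>i<d. \<Sum>j<d. Aiso \<kappa> i j * v i * v j)" for v
        proof -
          have "1 * sqnorm d v \<le> \<kappa> * sqnorm d v" using sqnn[of v] k1 by (intro mult_right_mono) auto
          then show ?thesis by (simp add: quad_form_iso)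
        qed
        show "(\<Sum>i<d. \<Sum>j<d. Aiso \<kappa> i j * v i * v j) \<le> \<kappa> * sqnorm d v" for v
          by (simp add: quad_form_iso)
        show "ennreal (1/100 * \<kappa> * sqrt (real d) / sqrt (ln (real d))) \<le> relaxation_time (target d (fI d \<kappa>)) (mala_kernel d (fI d \<kappa>) (gI d \<kappa>) h)"
          unfolding eqB by (rule relax)
      qed
    qed
  qed
qed


end
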